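(* Let $(W_1,S_1)$ and $(W_2,S_2)$ be irreducible Coxeter systems with Coxeter matrices $m^{(1)}$ and $m^{(2)}$, and suppose there is an injective map $\varphi:S_1\to S_2$ such that $m^{(1)}_{st}\le m^{(2)}_{\varphi(s)\varphi(t)}$ for all $s\neq t$ in $S_1$ (with the convention $k\le\infty$ for all $k$). Then $|W^{FC}_{1,l}|\le|W^{FC}_{2,l}|$ for all $l\ge0$, where $W^{FC}_{i,l}$ is the set of fully commutative elements of length $l$ in $W_i$.
   Context: Coxeter system $(W,S)$: finite $S$, symmetric $(m_{st})$ with $m_{ss}=1$, $m_{st}\in\{2,3,\dots\}\cup\{\infty\}$ for $s\neq t$, $W=\langle S\mid (st)^{m_{st}}=1,\ m_{st}<\infty\rangle$; length $\ell$ and reduced expressions as usual. $w$ is fully commutative if any two reduced expressions of $w$ are related by repeatedly swapping adjacent letters $s,t$ with $m_{st}=2$. Irreducible: the Coxeter graph (vertices $S$, edges $\{s,t\}$ with $m_{st}\ge3$) is connected. *)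

theory Defs
  imports Main "HOL-Library.Extended_Nat"
begin

definition coxeter_matrix :: "'a set \<Rightarrow> ('a \<Rightarrow> 'a \<Rightarrow> enat) \<Rightarrow> bool" where
  "coxeter_matrix S m \<longleftrightarrow> finite S \<and> (\<forall>s\<in>S. m s s = 1)
     \<and> (\<forall>s\<in>S. \<forall>t\<in>S. m s t = m t s)
     \<and> (\<forall>s\<in>S. \<forall>t\<in>S. s \<noteq> t \<longrightarrow> 2 \<le> m s t)"

text \<open>Irreducible: the Coxeter graph (edges s,t with m_st >= 3) is connected.\<close>
definition coxeter_irreducible :: "'a set \<Rightarrow> ('a \<Rightarrow> 'a \<Rightarrow> enat) \<Rightarrow> bool" where
  "coxeter_irreducible S m \<longleftrightarrow>
     (\<forall>s\<in>S. \<forall>t\<in>S. (s, t) \<in> {(u, v). u \<in> S \<and> v \<in> S \<and> u \<noteq> v \<and> 3 \<le> m u v}\<^sup>*)"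

fun alt_word :: "'a \<Rightarrow> 'a \<Rightarrow> nat \<Rightarrow> 'a list" where
  "alt_word s t 0 = []"
| "alt_word s t (Suc n) = s # alt_word t s n"

text \<open>One step: insertion of a defining relator (st)^(m_st), m_st finite
  (for s = t this is the relator s s).\<close>
definition relator_insert :: "'a set \<Rightarrow> ('a \<Rightarrow> 'a \<Rightarrow> enat) \<Rightarrow> 'a list \<Rightarrow> 'a list \<Rightarrow> bool" where
  "relator_insert S m u v \<longleftrightarrow> (\<exists>x y s t k. s \<in> S \<and> t \<in> S \<and> m s t = enat k
       \<and> u = x @ y \<and> v = x @ alt_word s t (2 * k) @ y)"

text \<open>Two words over S represent the same element of W iff related by
  insertions/deletions of defining relators.\<close>
definition coxeter_equiv :: "'a set \<Rightarrow> ('a \<Rightarrow> 'a \<Rightarrow> enat) \<Rightarrow> 'a list \<Rightarrow> 'a list \<Rightarrow> bool" where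
  "coxeter_equiv S m = (\<lambda>u v. relator_insert S m u v \<or> relator_insert S m v u)\<^sup>*\<^sup>*"

text \<open>Elements of W are the equivalence classes of words over S.\<close>
definition cox_elem :: "'a set \<Rightarrow> ('a \<Rightarrow> 'a \<Rightarrow> enat) \<Rightarrow> 'a list \<Rightarrow> 'a list set" where
  "cox_elem S m w = {v. coxeter_equiv S m w v}"

definition coxeter_group :: "'a set \<Rightarrow> ('a \<Rightarrow> 'a \<Rightarrow> enat) \<Rightarrow> 'a list set set" where
  "coxeter_group S m = cox_elem S m ` lists S"

definition cox_length :: "'a list set \<Rightarrow> nat" where
  "cox_length X = (LEAST n. \<exists>v\<in>X. length v = n)"

definition reduced_exprs :: "'a list set \<Rightarrow> 'a list set" where
  "reduced_exprs X = {v \<in> X. length v = cox_length X}"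

definition comm_move :: "('a \<Rightarrow> 'a \<Rightarrow> enat) \<Rightarrow> 'a list \<Rightarrow> 'a list \<Rightarrow> bool" where
  "comm_move m u v \<longleftrightarrow> (\<exists>x y s t. m s t = 2 \<and> u = x @ [s, t] @ y \<and> v = x @ [t, s] @ y)"

definition fully_commutative :: "('a \<Rightarrow> 'a \<Rightarrow> enat) \<Rightarrow> 'a list set \<Rightarrow> bool" where
  "fully_commutative m X \<longleftrightarrow>
     (\<forall>u\<in>reduced_exprs X. \<forall>v\<in>reduced_exprs X. (comm_move m)\<^sup>*\<^sup>* u v)"

definition fc_elements :: "'a set \<Rightarrow> ('a \<Rightarrow> 'a \<Rightarrow> enat) \<Rightarrow> nat \<Rightarrow> 'a list set set" where
  "fc_elements S m l = {X \<in> coxeter_group S m. fully_commutative m X \<and> cox_length X = l}"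

end

theory Submission
  imports Defs Complex_Main
begin

lemma alt_len[simp]: "length (alt_word a b n) = n"
  by (induction n arbitrary: a b) auto

lemma alt_set: "set (alt_word a b n) \<subseteq> {a,b}"
  by (induction n arbitrary: a b) auto

lemma alt_add: "alt_word a b (p + q) = alt_word a b p @ (if even p then alt_word a b q else alt_word b a q)"
  by (induction p arbitrary: a b) auto

lemma alt_snoc: "alt_word a b (Suc n) = alt_word a b n @ [if even n then a else b]"
  using alt_add[of a b n 1] by (auto simp: numeral_eq_Suc)

lemma alt_snoc_e: "even n \<Longrightarrow> alt_word a b n @ [a] = a # alt_word b a n"
  using alt_snoc[of a b n] by simp
lemma alt_snoc_o: "odd n \<Longrightarrow> alt_word a b n @ [b] = a # alt_word b a n"
  using alt_snoc[of a b n] by simp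

lemma alt_rev: "rev (alt_word a b n) = (if even n then alt_word b a n else alt_word a b n)"
  by (induction n arbitrary: a b) (auto simp: alt_snoc_e alt_snoc_o)

locale coxsys =
  fixes S :: "'a set" and m :: "'a \<Rightarrow> 'a \<Rightarrow> enat"
  assumes cm: "coxeter_matrix S m"
begin

abbreviation E where "E \<equiv> coxeter_equiv S m"

lemma m_refl: "s \<in> S \<Longrightarrow> m s s = 1" using cm unfolding coxeter_matrix_def by auto
lemma m_sym: "s \<in> S \<Longrightarrow> t \<in> S \<Longrightarrow> m s t = m t s" using cm unfolding coxeter_matrix_def by auto
lemma m_ge2: "s \<in> S \<Longrightarrow> t \<in> S \<Longrightarrow> s \<noteq> t \<Longrightarrow> 2 \<le> m s t" using cm unfolding coxeter_matrix_def by auto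
lemma finS: "finite S" using cm unfolding coxeter_matrix_def by auto

lemma E_refl[simp]: "E u u" unfolding coxeter_equiv_def by simp

lemma E_sym: "E u v \<Longrightarrow> E v u"
  unfolding coxeter_equiv_def
proof (induction rule: rtranclp_induct)
  case base then show ?case by simp
next
  case (step y z)
  have "(\<lambda>u v. relator_insert S m u v \<or> relator_insert S m v u) z y" using step(2) by blast
  then show ?case using step(3) by (rule converse_rtranclp_into_rtranclp)
qed

lemma E_trans: "E u v \<Longrightarrow> E v w \<Longrightarrow> E u w"
  unfolding coxeter_equiv_def by (rule rtranclp_trans)

lemma ri_cong: "relator_insert S m u v \<Longrightarrow> relator_insert S m (x@u@y) (x@v@y)"
proof -
  assume "relator_insert S m u v"
  then obtain x' y' s t k where h: "s \<in> S" "t \<in> S" "m s t = enat k" "u = x' @ y'" "v = x' @ alt_word s t (2 * k) @ y'"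
    unfolding relator_insert_def by blast
  show ?thesis unfolding relator_insert_def
    by (rule exI[of _ "x@x'"], rule exI[of _ "y'@y"]) (use h in auto)
qed

lemma E_cong: "E u v \<Longrightarrow> E (x@u@y) (x@v@y)"
  unfolding coxeter_equiv_def
proof (induction rule: rtranclp_induct)
  case base then show ?case by simp
next
  case (step a b)
  have "(\<lambda>u v. relator_insert S m u v \<or> relator_insert S m v u) (x@a@y) (x@b@y)" using step(2) ri_cong by blast
  with step(3) show ?case by (rule rtranclp.rtrancl_into_rtrancl)
qed

lemma E_congL: "E u v \<Longrightarrow> E (x@u) (x@v)" using E_cong[of u v x "[]"] by simp
lemma E_congR: "E u v \<Longrightarrow> E (u@y) (v@y)" using E_cong[of u v "[]" y] by simp
lemma E_app: "E u v \<Longrightarrow> E u' v' \<Longrightarrow> E (u@u') (v@v')"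
  by (meson E_congL E_congR E_trans)

lemma E_rel: "s \<in> S \<Longrightarrow> t \<in> S \<Longrightarrow> m s t = enat k \<Longrightarrow> E (alt_word s t (2*k)) []"
proof -
  assume a: "s \<in> S" "t \<in> S" "m s t = enat k"
  have "relator_insert S m [] (alt_word s t (2*k))"
    unfolding relator_insert_def using a by (intro exI[of _ "[]"]) force
  then have "E [] (alt_word s t (2*k))" unfolding coxeter_equiv_def by (intro r_into_rtranclp) blast
  then show ?thesis by (rule E_sym)
qed

lemma E_ss: "a \<in> S \<Longrightarrow> E [a,a] []"
  using E_rel[of a a 1] m_refl[of a] by (simp add: one_enat_def numeral_eq_Suc)

lemma E_inv: "w \<in> lists S \<Longrightarrow> E (w @ rev w) []"
proof (induction w)
  case Nil then show ?case by simp
next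
  case (Cons a w)
  have "E (a # w @ rev w @ [a]) (a # [] @ [a])"
    using E_cong[OF Cons.IH, of "[a]" "[a]"] Cons.prems by simp
  then show ?case using E_ss[of a] Cons.prems by (auto intro: E_trans)
qed

lemma E_inv': "w \<in> lists S \<Longrightarrow> E (rev w @ w) []"
  using E_inv[of "rev w"] by (simp add: in_lists_conv_set)

lemma cancelL: "c \<in> lists S \<Longrightarrow> E (c@u) (c@v) \<Longrightarrow> E u v"
proof -
  assume c: "c \<in> lists S" and h: "E (c@u) (c@v)"
  have "E (rev c @ c @ u) (rev c @ c @ v)" using E_congL[OF h] .
  moreover have "E (rev c @ c @ u) u" using E_congR[OF E_inv'[OF c], of u] by simp
  moreover have "E (rev c @ c @ v) v" using E_congR[OF E_inv'[OF c], of v] by simp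
  ultimately show ?thesis by (meson E_sym E_trans)
qed

lemma cancelR: "c \<in> lists S \<Longrightarrow> E (u@c) (v@c) \<Longrightarrow> E u v"
proof -
  assume c: "c \<in> lists S" and h: "E (u@c) (v@c)"
  have "E (u @ c @ rev c) (v @ c @ rev c)" using E_congR[OF h, of "rev c"] by simp
  moreover have "E (u @ c @ rev c) u" using E_congL[OF E_inv[OF c], of u] by simp
  moreover have "E (v @ c @ rev c) v" using E_congL[OF E_inv[OF c], of v] by simp
  ultimately show ?thesis by (meson E_sym E_trans)
qed

lemma E_move_right: "c \<in> lists S \<Longrightarrow> E (u@c) v \<Longrightarrow> E u (v @ rev c)"
proof -
  assume c: "c \<in> lists S" and h: "E (u@c) v"
  have "E (u @ c @ rev c) (v @ rev c)" using E_congR[OF h, of "rev c"] by simp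
  moreover have "E (u @ c @ rev c) u" using E_congL[OF E_inv[OF c], of u] by simp
  ultimately show ?thesis by (meson E_sym E_trans)
qed

lemma ri_lists: "relator_insert S m u v \<Longrightarrow> (u \<in> lists S \<longleftrightarrow> v \<in> lists S)"
  unfolding relator_insert_def using alt_set by fastforce

lemma E_lists: "E u v \<Longrightarrow> u \<in> lists S \<Longrightarrow> v \<in> lists S"
  unfolding coxeter_equiv_def
proof (induction rule: rtranclp_induct)
  case base then show ?case by simp
next
  case (step a b) then show ?case using ri_lists by blast
qed

lemma E_parity: "E u v \<Longrightarrow> even (length u) = even (length v)"
  unfolding coxeter_equiv_def
proof (induction rule: rtranclp_induct)
  case base then show ?case by simp
next
  case (step a b)
  then show ?case unfolding relator_insert_def by auto
qed

lemma braid: "s \<in> S \<Longrightarrow> t \<in> S \<Longrightarrow> m s t = enat k \<Longrightarrow> E (alt_word s t k) (alt_word t s k)"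
proof -
  assume a: "s \<in> S" "t \<in> S" "m s t = enat k"
  have "E (alt_word s t (k + k)) []" using E_rel[OF a] by (simp add: mult_2)
  hence h: "E (alt_word s t k @ (if even k then alt_word s t k else alt_word t s k)) []"
    by (simp add: alt_add)
  have l: "(if even k then alt_word s t k else alt_word t s k) \<in> lists S"
    using alt_set[of s t k] alt_set[of t s k] a by auto
  have "E (alt_word s t k) ([] @ rev (if even k then alt_word s t k else alt_word t s k))"
    using E_move_right[OF l h] .
  then show ?thesis by (simp add: alt_rev split: if_splits)
qed

end

fun rl :: "'a list \<Rightarrow> 'a list list" where
  "rl [] = []"
| "rl (a # w) = (rev w @ a # w) # rl w"

lemma rl_len[simp]: "length (rl w) = length w"
  by (induction w) auto

lemma rl_append: "rl (x @ y) = map (\<lambda>r. rev y @ r @ y) (rl x) @ rl y"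
  by (induction x) auto

lemma rl_nth: "j < length w \<Longrightarrow> rl w ! j = rev (drop j w) @ drop (Suc j) w"
proof (induction w arbitrary: j)
  case Nil then show ?case by simp
next
  case (Cons a w) then show ?case by (cases j) auto
qed

lemma alt_drop: "drop j (alt_word a b n) = (if even j then alt_word a b (n - j) else alt_word b a (n - j))"
proof (induction j arbitrary: a b n)
  case 0 then show ?case by simp
next
  case (Suc j) then show ?case by (cases n) auto
qed

lemma pal: "rev (alt_word a b (Suc L)) @ alt_word b a L
   = (if even L then alt_word a b (2*L+1) else alt_word b a (2*L+1))"
proof -
  have e: "Suc L + L = 2*L+1" by simp
  show ?thesis
  proof (cases "even L")
    case True
    have "alt_word a b (2*L+1) = alt_word a b (Suc L) @ alt_word b a L"
      using alt_add[of a b "Suc L" L] True e by (simp add: mult_2 del: alt_word.simps)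
    moreover have "rev (alt_word a b (Suc L)) = alt_word a b (Suc L)"
      using alt_rev[of a b "Suc L"] True by (simp del: alt_word.simps)
    ultimately show ?thesis using True by simp
  next
    case False
    have "alt_word b a (2*L+1) = alt_word b a (Suc L) @ alt_word b a L"
      using alt_add[of b a "Suc L" L] False e by (simp add: mult_2 del: alt_word.simps)
    moreover have "rev (alt_word a b (Suc L)) = alt_word b a (Suc L)"
      using alt_rev[of a b "Suc L"] False by (simp del: alt_word.simps)
    ultimately show ?thesis using False by simp
  qed
qed

lemma rl_alt_nth: "j < n \<Longrightarrow> rl (alt_word a b n) ! j =
   (if odd n then alt_word a b (2*(n-1-j)+1) else alt_word b a (2*(n-1-j)+1))"
proof -
  assume j: "j < n"
  define L where "L = n - 1 - j"
  have nj: "n - j = Suc L" using j L_def by simp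
  have d1: "drop j (alt_word a b n) = (if even j then alt_word a b (Suc L) else alt_word b a (Suc L))"
    using alt_drop[of j a b n] nj by (simp del: alt_word.simps)
  have d2: "drop (Suc j) (alt_word a b n) = (if even j then alt_word b a L else alt_word a b L)"
  proof -
    have "n - Suc j = L" using nj by simp
    then show ?thesis using alt_drop[of "Suc j" a b n] by (simp del: alt_word.simps)
  qed
  have "rl (alt_word a b n) ! j = rev (drop j (alt_word a b n)) @ drop (Suc j) (alt_word a b n)"
    by (rule rl_nth) (simp add: j)
  also have "\<dots> = (if odd n then alt_word a b (2*L+1) else alt_word b a (2*L+1))"
  proof -
    have "n = L + j + 1" using j L_def by simp
    then show ?thesis using d1 d2 pal[of a b L] pal[of b a L] by (auto simp del: alt_word.simps)
  qed
  finally show ?thesis unfolding L_def .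
qed

lemma len_filter_all2: "list_all2 (\<lambda>a b. P a = Q b) xs ys \<Longrightarrow> length (filter P xs) = length (filter Q ys)"
  by (induction rule: list_all2_induct) auto

lemma filter_single: "distinct xs \<Longrightarrow> c \<in> set xs \<Longrightarrow> filter (\<lambda>x. x = c) xs = [c]"
  by (induction xs) (auto simp: filter_empty_conv)

context coxsys
begin

abbreviation cls where "cls \<equiv> cox_elem S m"

lemma cls_eq: "cls r = cls t \<longleftrightarrow> E r t"
proof
  assume "cls r = cls t"
  then have "t \<in> cls r" unfolding cox_elem_def by auto
  then show "E r t" unfolding cox_elem_def by auto
next
  assume "E r t"
  then show "cls r = cls t" unfolding cox_elem_def by (auto intro: E_trans E_sym)
qed

definition cnt where "cnt w t = length (filter (\<lambda>r. E r t) (rl w))"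

lemma conj_compat: "E a b \<Longrightarrow> E (rev y @ a @ y) t = E (rev y @ b @ y) t"
  by (meson E_cong E_sym E_trans)

lemma rl_alt_pair:
  assumes s: "s \<in> S" "t \<in> S" "m s t = enat k" "j < k"
  shows "E (rl (alt_word s t (2*k)) ! j) (rl (alt_word s t (2*k)) ! (k + j))"
proof -
  have e1: "rl (alt_word s t (2*k)) ! j = alt_word t s (2*(2*k-1-j)+1)"
    using rl_alt_nth[of j "2*k" s t] assms by simp
  have e2: "rl (alt_word s t (2*k)) ! (k+j) = alt_word t s (2*(k-1-j)+1)"
    using rl_alt_nth[of "k+j" "2*k" s t] assms by simp
  have "2*(2*k-1-j)+1 = 2*k + (2*(k-1-j)+1)" using assms by simp
  then have "alt_word t s (2*(2*k-1-j)+1) = alt_word t s (2*k) @ alt_word t s (2*(k-1-j)+1)"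
    using alt_add[of t s "2*k" "2*(k-1-j)+1"] by (simp del: alt_word.simps)
  moreover have "E (alt_word t s (2*k)) []" using E_rel[of t s k] assms m_sym by simp
  ultimately show ?thesis unfolding e1 e2 using E_congR by fastforce
qed

lemma cnt_relator:
  assumes s: "s \<in> S" "t \<in> S" "m s t = enat k"
  shows "even (cnt (x @ alt_word s t (2*k) @ y) r) = even (cnt (x @ y) r)"
proof -
  define z where "z = alt_word s t (2*k)"
  have Ez: "E z []" unfolding z_def using E_rel assms by simp
  have Erz: "E (rev z) []"
  proof -
    have "rev z = alt_word t s (2*k)" unfolding z_def by (simp add: alt_rev)
    then show ?thesis using E_rel[of t s k] assms m_sym by simp
  qed
  have r1: "rl (x @ z @ y) = map (\<lambda>q. rev (z@y) @ q @ z @ y) (rl x) @ map (\<lambda>q. rev y @ q @ y) (rl z) @ rl y"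
    by (simp add: rl_append)
  have r2: "rl (x @ y) = map (\<lambda>q. rev y @ q @ y) (rl x) @ rl y"
    by (simp add: rl_append)
  have A: "length (filter (\<lambda>q. E q r) (map (\<lambda>q. rev (z@y) @ q @ z @ y) (rl x)))
         = length (filter (\<lambda>q. E q r) (map (\<lambda>q. rev y @ q @ y) (rl x)))"
  proof (rule len_filter_all2)
    show "list_all2 (\<lambda>a b. E a r = E b r) (map (\<lambda>q. rev (z@y) @ q @ z @ y) (rl x)) (map (\<lambda>q. rev y @ q @ y) (rl x))"
    proof (rule list_all2_all_nthI)
      fix n assume n: "n < length (map (\<lambda>q. rev (z@y) @ q @ z @ y) (rl x))"
      let ?q = "rl x ! n"
      have "E (rev y @ rev z @ ?q @ z @ y) (rev y @ [] @ ?q @ [] @ y)"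
        using E_app[OF E_refl[of "rev y"] E_app[OF Erz E_app[OF E_refl[of ?q] E_app[OF Ez E_refl[of y]]]]] by simp
      then show "E (map (\<lambda>q. rev (z@y) @ q @ z @ y) (rl x) ! n) r = E (map (\<lambda>q. rev y @ q @ y) (rl x) ! n) r"
        using n by simp (meson E_sym E_trans)
    qed simp
  qed
  define P where "P = (\<lambda>q. E (rev y @ q @ y) r)"
  have B: "even (length (filter P (rl z)))"
  proof -
    have lz: "length (rl z) = k + k" unfolding z_def by simp
    have split: "rl z = take k (rl z) @ drop k (rl z)" by simp
    have "list_all2 (\<lambda>a b. P a = P b) (take k (rl z)) (drop k (rl z))"
    proof (rule list_all2_all_nthI)
      show "length (take k (rl z)) = length (drop k (rl z))" using lz by simp
    next
      fix n assume n: "n < length (take k (rl z))"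
      then have nk: "n < k" by simp
      have "E (rl z ! n) (rl z ! (k + n))" unfolding z_def using rl_alt_pair assms nk by blast
      then show "P (take k (rl z) ! n) = P (drop k (rl z) ! n)"
        unfolding P_def using nk lz conj_compat by simp
    qed
    then have "length (filter P (take k (rl z))) = length (filter P (drop k (rl z)))"
      by (rule len_filter_all2)
    then show ?thesis by (metis split filter_append length_append even_add)
  qed
  have "cnt (x @ z @ y) r = length (filter (\<lambda>q. E q r) (map (\<lambda>q. rev (z@y) @ q @ z @ y) (rl x)))
       + length (filter P (rl z)) + length (filter (\<lambda>q. E q r) (rl y))"
    unfolding cnt_def r1 P_def by (simp add: comp_def)
  moreover have "cnt (x @ y) r = length (filter (\<lambda>q. E q r) (map (\<lambda>q. rev y @ q @ y) (rl x)))
       + length (filter (\<lambda>q. E q r) (rl y))"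
    unfolding cnt_def r2 by simp
  ultimately show ?thesis using A B unfolding z_def by simp
qed

lemma cnt_E: "E u v \<Longrightarrow> even (cnt u r) = even (cnt v r)"
  unfolding coxeter_equiv_def
proof (induction rule: rtranclp_induct)
  case base then show ?case by simp
next
  case (step a b)
  have "even (cnt a r) = even (cnt b r)"
    using step(2) unfolding relator_insert_def using cnt_relator by (metis)
  with step(3) show ?case by simp
qed

definition OddS where "OddS w = {cls t | t. odd (cnt w t)}"

lemma OddS_E: "E u v \<Longrightarrow> OddS u = OddS v"
  unfolding OddS_def by (simp add: cnt_E)

lemma OddS_sub: "OddS w \<subseteq> cls ` set (rl w)"
proof
  fix c assume "c \<in> OddS w"
  then obtain t where t: "c = cls t" "odd (cnt w t)" unfolding OddS_def by auto
  then have "filter (\<lambda>r. E r t) (rl w) \<noteq> []" unfolding cnt_def by auto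
  then obtain r where "r \<in> set (rl w)" "E r t" by (auto simp: filter_empty_conv)
  then show "c \<in> cls ` set (rl w)" using t cls_eq by auto
qed

lemma card_OddS: "card (OddS w) \<le> length w"
proof -
  have "card (OddS w) \<le> card (cls ` set (rl w))"
    by (rule card_mono[OF _ OddS_sub]) simp
  also have "\<dots> \<le> card (set (rl w))" by (rule card_image_le) simp
  also have "\<dots> \<le> length w" using card_length[of "rl w"] by simp
  finally show ?thesis .
qed

lemma card_OddS_dist: "distinct (map cls (rl w)) \<Longrightarrow> card (OddS w) = length w"
proof -
  assume d: "distinct (map cls (rl w))"
  have "OddS w = cls ` set (rl w)"
  proof
    show "OddS w \<subseteq> cls ` set (rl w)" by (rule OddS_sub)
  next
    show "cls ` set (rl w) \<subseteq> OddS w"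
    proof
      fix c assume "c \<in> cls ` set (rl w)"
      then obtain r where r: "r \<in> set (rl w)" "c = cls r" by auto
      have "map cls (filter (\<lambda>q. E q r) (rl w)) = filter (\<lambda>x. x = cls r) (map cls (rl w))"
        by (simp add: filter_map comp_def cls_eq)
      also have "\<dots> = [cls r]" using filter_single[OF d] r by simp
      finally have "length (map cls (filter (\<lambda>q. E q r) (rl w))) = 1" by simp
      then have "cnt w r = 1" unfolding cnt_def by simp
      then show "c \<in> OddS w" unfolding OddS_def using r by auto
    qed
  qed
  moreover have "card (set (map cls (rl w))) = length (map cls (rl w))" by (rule distinct_card[OF d])
  ultimately show ?thesis by simp
qed

definition red where "red w \<longleftrightarrow> (\<forall>u. E w u \<longrightarrow> length w \<le> length u)"

lemma red_if_dist: "distinct (map cls (rl w)) \<Longrightarrow> red w"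
  unfolding red_def
proof (intro allI impI)
  fix u assume d: "distinct (map cls (rl w))" and e: "E w u"
  have "length w = card (OddS w)" using card_OddS_dist[OF d] by simp
  also have "\<dots> = card (OddS u)" using OddS_E[OF e] by simp
  also have "\<dots> \<le> length u" by (rule card_OddS)
  finally show "length w \<le> length u" .
qed

lemma delete2:
  assumes l: "x @ [a] @ y @ [b] @ z \<in> lists S"
    and h: "E (rev (y @ [b] @ z) @ [a] @ y @ [b] @ z) (rev z @ [b] @ z)"
  shows "E (x @ [a] @ y @ [b] @ z) (x @ y @ z)"
proof -
  have lz: "rev z \<in> lists S" "z \<in> lists S" "y \<in> lists S" "a \<in> S" "b \<in> S" "[b] \<in> lists S" using l by auto
  have h1: "E (rev z @ (([b] @ rev y @ [a] @ y @ [b]) @ z)) (rev z @ ([b] @ z))" using h by simp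
  have h2: "E (([b] @ rev y @ [a] @ y @ [b]) @ z) ([b] @ z)" by (rule cancelL[OF lz(1) h1])
  have h3: "E ([b] @ rev y @ [a] @ y @ [b]) [b]" by (rule cancelR[OF lz(2) h2])
  have h4: "E ([b] @ (rev y @ [a] @ y @ [b])) ([b] @ [])" using h3 by simp
  have h5: "E (rev y @ [a] @ y @ [b]) []" by (rule cancelL[OF lz(6) h4])
  have h6: "E (y @ (rev y @ [a] @ y @ [b])) (y @ [])" using E_congL[OF h5] .
  have h7: "E ((y @ rev y) @ ([a] @ y @ [b])) ([] @ ([a] @ y @ [b]))" by (rule E_congR[OF E_inv[OF lz(3)]])
  have h8: "E ([a] @ y @ [b]) y"
    using h6 h7 E_sym E_trans by (metis append.assoc append_Nil append_Nil2)
  show ?thesis using E_cong[OF h8, of x z] by simp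
qed

lemma delete_idx:
  assumes l: "w \<in> lists S" and ij: "i < j" "j < length w" and h: "E (rl w ! i) (rl w ! j)"
  shows "E w (take i w @ take (j - Suc i) (drop (Suc i) w) @ drop (Suc j) w)"
proof -
  define x where "x = take i w"
  define a where "a = w ! i"
  define y where "y = take (j - Suc i) (drop (Suc i) w)"
  define b where "b = w ! j"
  define z where "z = drop (Suc j) w"
  have dj: "drop j w = b # z" unfolding b_def z_def using ij by (simp add: Cons_nth_drop_Suc)
  have "drop (Suc i) w = y @ drop j w"
  proof -
    have "drop (Suc i) w = take (j - Suc i) (drop (Suc i) w) @ drop (j - Suc i) (drop (Suc i) w)"
      by (rule append_take_drop_id[symmetric])
    also have "drop (j - Suc i) (drop (Suc i) w) = drop j w" using ij by (simp add: drop_drop)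
    finally show ?thesis unfolding y_def .
  qed
  then have dsi: "drop (Suc i) w = y @ [b] @ z" using dj by simp
  have "drop i w = w ! i # drop (Suc i) w" using Cons_nth_drop_Suc[of i w] ij by simp
  then have di: "drop i w = a # y @ [b] @ z" using dsi unfolding a_def by simp
  have w: "w = x @ [a] @ y @ [b] @ z" using di append_take_drop_id[of i w] unfolding x_def by simp
  have "rl w ! i = rev (y @ [b] @ z) @ [a] @ y @ [b] @ z" using rl_nth[of i w] ij di dsi by simp
  moreover have "rl w ! j = rev z @ [b] @ z" using rl_nth[of j w] ij dj unfolding z_def by simp
  ultimately have "E (x @ [a] @ y @ [b] @ z) (x @ y @ z)" using delete2 l w h by metis
  then show ?thesis using w unfolding x_def y_def z_def by simp
qed

lemma red_dist: assumes "w \<in> lists S" "red w" shows "distinct (map cls (rl w))"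
proof (rule ccontr)
  assume "\<not> distinct (map cls (rl w))"
  then obtain i j where ij0: "i < length w" "j < length w" "i \<noteq> j" "cls (rl w ! i) = cls (rl w ! j)"
    unfolding distinct_conv_nth by auto
  have "\<exists>i j. i < j \<and> j < length w \<and> cls (rl w ! i) = cls (rl w ! j)"
  proof (cases "i < j")
    case True then show ?thesis using ij0 by blast
  next
    case False then have "j < i" using ij0 by simp
    then show ?thesis using ij0 by (metis)
  qed
  then obtain i j where ij: "i < j" "j < length w" "cls (rl w ! i) = cls (rl w ! j)" by blast
  have "E w (take i w @ take (j - Suc i) (drop (Suc i) w) @ drop (Suc j) w)"
    using delete_idx[OF assms(1) ij(1,2)] ij(3) cls_eq by blast
  moreover have "length (take i w @ take (j - Suc i) (drop (Suc i) w) @ drop (Suc j) w) < length w"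
    using ij by simp
  ultimately show False using assms unfolding red_def by fastforce
qed

lemma red_iff: "w \<in> lists S \<Longrightarrow> red w \<longleftrightarrow> distinct (map cls (rl w))"
  using red_dist red_if_dist by blast

lemma exchange:
  assumes l: "w \<in> lists S" "a \<in> S" and r: "red w" and nr: "\<not> red (w @ [a])"
  shows "\<exists>i < length w. E (w @ [a]) (take i w @ drop (Suc i) w)"
proof -
  have dw: "distinct (map cls (rl w))" using red_dist l r by blast
  have lw: "w @ [a] \<in> lists S" using l by simp
  have rla: "rl (w @ [a]) = map (\<lambda>q. [a] @ q @ [a]) (rl w) @ [[a]]"
    by (simp add: rl_append)
  have nd: "\<not> distinct (map cls (rl (w @ [a])))" using nr red_if_dist by blast
  have la: "[a] \<in> lists S" using l by simp
  have conj_inj: "E ([a] @ p @ [a]) ([a] @ q @ [a]) \<Longrightarrow> E p q" for p q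
  proof -
    assume "E ([a] @ p @ [a]) ([a] @ q @ [a])"
    then have "E (p @ [a]) (q @ [a])" by (rule cancelL[OF la])
    then show "E p q" by (rule cancelR[OF la])
  qed
  have dmap: "distinct (map cls (map (\<lambda>q. [a] @ q @ [a]) (rl w)))"
    unfolding distinct_conv_nth
  proof (intro allI impI)
    fix i j assume ij: "i < length (map cls (map (\<lambda>q. [a] @ q @ [a]) (rl w)))"
      "j < length (map cls (map (\<lambda>q. [a] @ q @ [a]) (rl w)))" "i \<noteq> j"
    show "map cls (map (\<lambda>q. [a] @ q @ [a]) (rl w)) ! i \<noteq> map cls (map (\<lambda>q. [a] @ q @ [a]) (rl w)) ! j"
    proof
      assume "map cls (map (\<lambda>q. [a] @ q @ [a]) (rl w)) ! i = map cls (map (\<lambda>q. [a] @ q @ [a]) (rl w)) ! j"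
      then have "E ([a] @ rl w ! i @ [a]) ([a] @ rl w ! j @ [a])" using ij cls_eq by simp
      then have "cls (rl w ! i) = cls (rl w ! j)" using conj_inj cls_eq by blast
      then show False using dw ij by (simp add: distinct_conv_nth)
    qed
  qed
  have "cls [a] \<in> set (map cls (map (\<lambda>q. [a] @ q @ [a]) (rl w)))"
    using nd dmap unfolding rla by simp
  then obtain i where i0: "i < length (rl w)" "cls [a] = cls ([a] @ rl w ! i @ [a])"
    unfolding in_set_conv_nth by auto
  then have i: "i < length w" "cls ([a] @ rl w ! i @ [a]) = cls [a]" by auto
  have "E (rl (w@[a]) ! i) (rl (w@[a]) ! length w)"
    using i cls_eq unfolding rla by (simp add: nth_append)
  then have "E (w @ [a]) (take i (w@[a]) @ take (length w - Suc i) (drop (Suc i) (w@[a])) @ drop (Suc (length w)) (w@[a]))"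
    using delete_idx[OF lw, of i "length w"] i by simp
  moreover have "take i (w@[a]) @ take (length w - Suc i) (drop (Suc i) (w@[a])) @ drop (Suc (length w)) (w@[a])
     = take i w @ drop (Suc i) w" using i by simp
  ultimately show ?thesis using i by auto
qed

end

definition Mf :: "real \<Rightarrow> real \<times> real \<Rightarrow> real \<times> real" where
  "Mf b z = (2 * snd z * b - fst z, - snd z - 2 * (fst z - 2 * snd z * b) * b)"

lemma Mf_lin: "Mf b (\<alpha> * fst x + \<beta> * fst y, \<alpha> * snd x + \<beta> * snd y)
   = (\<alpha> * fst (Mf b x) + \<beta> * fst (Mf b y), \<alpha> * snd (Mf b x) + \<beta> * snd (Mf b y))"
  unfolding Mf_def by (simp add: algebra_simps)

lemma Mf_CH: "Mf b (Mf b z) = ((4*b^2-2) * fst (Mf b z) - fst z, (4*b^2-2) * snd (Mf b z) - snd z)"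
  unfolding Mf_def by (simp add: algebra_simps power2_eq_square)

fun Aseq :: "real \<Rightarrow> nat \<Rightarrow> real" where
  "Aseq \<tau> 0 = 0"
| "Aseq \<tau> (Suc 0) = 1"
| "Aseq \<tau> (Suc (Suc n)) = \<tau> * Aseq \<tau> (Suc n) - Aseq \<tau> n"

lemma Mf_pow: "(Mf b ^^ Suc n) z = (Aseq (4*b^2-2) (Suc n) * fst (Mf b z) - Aseq (4*b^2-2) n * fst z,
                                   Aseq (4*b^2-2) (Suc n) * snd (Mf b z) - Aseq (4*b^2-2) n * snd z)"
proof (induction n)
  case 0 then show ?case by simp
next
  case (Suc n)
  define \<tau> where "\<tau> = 4*b^2-2"
  have "(Mf b ^^ Suc (Suc n)) z = Mf b ((Mf b ^^ Suc n) z)" by simp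
  also have "\<dots> = Mf b (Aseq \<tau> (Suc n) * fst (Mf b z) + (- Aseq \<tau> n) * fst z,
                        Aseq \<tau> (Suc n) * snd (Mf b z) + (- Aseq \<tau> n) * snd z)"
    using Suc unfolding \<tau>_def by simp
  also have "\<dots> = (Aseq \<tau> (Suc n) * fst (Mf b (Mf b z)) + (- Aseq \<tau> n) * fst (Mf b z),
                   Aseq \<tau> (Suc n) * snd (Mf b (Mf b z)) + (- Aseq \<tau> n) * snd (Mf b z))"
    by (rule Mf_lin)
  also have "\<dots> = (Aseq \<tau> (Suc (Suc n)) * fst (Mf b z) - Aseq \<tau> (Suc n) * fst z,
                   Aseq \<tau> (Suc (Suc n)) * snd (Mf b z) - Aseq \<tau> (Suc n) * snd z)"
  proof -
    have ch: "Mf b (Mf b z) = (\<tau> * fst (Mf b z) - fst z, \<tau> * snd (Mf b z) - snd z)"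
      using Mf_CH unfolding \<tau>_def by simp
    show ?thesis unfolding ch by (simp add: algebra_simps)
  qed
  finally show ?case unfolding \<tau>_def .
qed

lemma sin_rec: "sin (real (Suc (Suc n)) * \<phi>) = 2 * cos \<phi> * sin (real (Suc n) * \<phi>) - sin (real n * \<phi>)"
proof -
  have a: "real (Suc (Suc n)) * \<phi> = real (Suc n) * \<phi> + \<phi>" by (simp add: algebra_simps)
  have b: "real n * \<phi> = real (Suc n) * \<phi> - \<phi>" by (simp add: algebra_simps)
  show ?thesis unfolding a b sin_add sin_diff by (simp add: algebra_simps)
qed

lemma Aseq_sin2: "Aseq (2 * cos \<phi>) n * sin \<phi> = sin (real n * \<phi>) \<and>
   Aseq (2 * cos \<phi>) (Suc n) * sin \<phi> = sin (real (Suc n) * \<phi>)"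
proof (induction n)
  case 0 then show ?case by simp
next
  case (Suc n)
  then show ?case using sin_rec[of n \<phi>] by (simp add: algebra_simps)
qed

lemma Aseq_sin: "Aseq (2 * cos \<phi>) n * sin \<phi> = sin (real n * \<phi>)"
  using Aseq_sin2 by blast


lemma tau_eq: "4 * (- cos (x::real))^2 - 2 = 2 * cos (2*x)"
  by (simp add: cos_double_cos)

lemma cos_pi_k_lt1: "2 \<le> k \<Longrightarrow> cos (pi / real k) < 1"
proof -
  assume k: "2 \<le> k"
  have "cos (pi / real k) < cos 0"
    using k by (intro cos_monotone_0_pi) (auto simp: field_simps)
  then show ?thesis by simp
qed

lemma cos_pi_k_pos: "3 \<le> k \<Longrightarrow> 0 < cos (pi / real k)"
proof -
  assume k: "3 \<le> k"
  have "pi / real k < pi / 2" using k pi_gt_zero by (intro divide_strict_left_mono) auto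
  moreover have "0 < pi / real k" using k by simp
  ultimately show ?thesis by (intro cos_gt_zero) auto
qed

lemma cos_pi_k_nonneg: "2 \<le> k \<Longrightarrow> 0 \<le> cos (pi / real k)"
proof -
  assume k: "2 \<le> k"
  have "pi / real k \<le> pi / 2" using k pi_gt_zero by (intro divide_left_mono) auto
  moreover have "0 < pi / real k" using k by simp
  ultimately show ?thesis by (intro cos_ge_zero) auto
qed

lemma phi_bounds: "3 \<le> k \<Longrightarrow> 0 < 2 * (pi / real k) \<and> 2 * (pi / real k) < pi"
proof -
  assume k: "3 \<le> k"
  have "pi / real k < pi / 2" using k pi_gt_zero by (intro divide_strict_left_mono) auto
  moreover have "0 < pi / real k" using k by simp
  ultimately show ?thesis by linarith
qed

lemma Mf_period:
  assumes k: "2 \<le> k" and b: "b = - cos (pi / real k)"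
  shows "(Mf b ^^ k) z = z"
proof (cases "k = 2")
  case True
  then have "b = 0" using b by simp
  then show ?thesis using True by (simp add: Mf_def numeral_eq_Suc)
next
  case False
  then have k3: "3 \<le> k" using k by simp
  define \<phi> where "\<phi> = 2 * (pi / real k)"
  have tau: "4*b^2-2 = 2 * cos \<phi>" unfolding b \<phi>_def by (rule tau_eq)
  have phi_pos: "0 < \<phi>" "\<phi> < pi" using phi_bounds[OF k3] unfolding \<phi>_def by auto
  have sphi: "sin \<phi> \<noteq> 0" using sin_gt_zero[OF phi_pos] by simp
  obtain k' where k': "k = Suc k'" using k3 by (cases k) auto
  have kphi: "real k * \<phi> = 2 * pi" using k3 unfolding \<phi>_def by (simp add: field_simps)
  have A1: "Aseq (2 * cos \<phi>) k = 0"
    using Aseq_sin[of \<phi> k] kphi sphi by simp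
  have "real k' * \<phi> = 2 * pi - \<phi>" using kphi k' by (simp add: algebra_simps)
  then have "sin (real k' * \<phi>) = - sin \<phi>" by (simp add: sin_diff)
  then have "(Aseq (2 * cos \<phi>) k' + 1) * sin \<phi> = 0"
    using Aseq_sin[of \<phi> k'] by (simp add: algebra_simps)
  then have A2: "Aseq (2 * cos \<phi>) k' = -1" using sphi by simp
  show ?thesis using Mf_pow[where b=b and n=k' and z=z] A1 A2 unfolding tau k' by simp
qed

lemma Mf_sum_zero:
  assumes k: "2 \<le> k" and b: "b = - cos (pi / real k)"
  shows "(\<Sum>i<k. fst ((Mf b ^^ i) z)) = 0 \<and> (\<Sum>i<k. snd ((Mf b ^^ i) z)) = 0"
proof -
  define p where "p i = fst ((Mf b ^^ i) z)" for i
  define q where "q i = snd ((Mf b ^^ i) z)" for i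
  have per: "p k = p 0" "q k = q 0" using Mf_period[OF k b, of z] unfolding p_def q_def by auto
  have stp: "p (Suc i) = 2 * q i * b - p i" "q (Suc i) = - q i - 2 * (p i - 2 * q i * b) * b" for i
    unfolding p_def q_def by (simp_all add: Mf_def)
  have shift: "(\<Sum>i<k. f (Suc i)) = (\<Sum>i<k. f i)" if "f k = f 0" for f :: "nat \<Rightarrow> real"
  proof -
    have "(\<Sum>i<Suc k. f i) = f 0 + (\<Sum>i<k. f (Suc i))" by (rule sum.lessThan_Suc_shift)
    moreover have "(\<Sum>i<Suc k. f i) = (\<Sum>i<k. f i) + f k" by simp
    ultimately show ?thesis using that by simp
  qed
  define Sp where "Sp = (\<Sum>i<k. p i)"
  define Sq where "Sq = (\<Sum>i<k. q i)"
  have "Sp = (\<Sum>i<k. p (Suc i))" unfolding Sp_def using shift[of p] per by simp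
  also have "\<dots> = (\<Sum>i<k. 2 * b * q i - p i)" by (intro sum.cong refl) (simp add: stp(1) mult_ac)
  also have "\<dots> = 2 * b * Sq - Sp" unfolding Sp_def Sq_def by (simp add: sum_subtractf sum_distrib_left)
  finally have e1: "Sp = b * Sq" by simp
  have "Sq = (\<Sum>i<k. q (Suc i))" unfolding Sq_def using shift[of q] per by simp
  also have "\<dots> = (\<Sum>i<k. (4 * b^2 - 1) * q i - 2 * b * p i)" by (intro sum.cong refl) (simp add: stp(2) algebra_simps power2_eq_square)
  also have "\<dots> = (4 * b^2 - 1) * Sq - 2 * b * Sp" unfolding Sp_def Sq_def by (simp add: sum_subtractf sum_distrib_left)
  finally have e2: "Sq = (4 * b^2 - 1) * Sq - 2 * b * Sp" .
  have "2 * (1 - b^2) * Sq = 0" using e1 e2 by (simp add: algebra_simps power2_eq_square)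
  moreover have "b^2 \<noteq> 1"
  proof -
    have "0 \<le> cos (pi / real k)" "cos (pi / real k) < 1" using cos_pi_k_lt1 cos_pi_k_nonneg k by auto
    then have "(cos (pi / real k))^2 < 1" by (simp add: power_less_one_iff)
    then show ?thesis using b by simp
  qed
  ultimately have "Sq = 0" by simp
  then show ?thesis using e1 unfolding Sp_def Sq_def p_def q_def by simp
qed

lemma Mf_faithful:
  assumes k: "3 \<le> k" and b: "b = - cos (pi / real k)" and d: "0 < d" "d < k" and c: "c \<noteq> 0"
  shows "(Mf b ^^ d) (0, c) \<noteq> (0, c)"
proof
  assume h: "(Mf b ^^ d) (0, c) = (0, c)"
  define \<phi> where "\<phi> = 2 * (pi / real k)"
  have tau: "4*b^2-2 = 2 * cos \<phi>" unfolding b \<phi>_def by (rule tau_eq)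
  have phi_pos: "0 < \<phi>" "\<phi> < pi" using phi_bounds[OF k] unfolding \<phi>_def by auto
  have sphi: "sin \<phi> \<noteq> 0" using sin_gt_zero[OF phi_pos] by simp
  have bnz: "b \<noteq> 0" using cos_pi_k_pos[OF k] b by simp
  obtain d' where d': "d = Suc d'" using d by (cases d) auto
  have h2: "(Aseq (2 * cos \<phi>) (Suc d') * fst (Mf b (0, c)) - Aseq (2 * cos \<phi>) d' * fst (0::real, c),
             Aseq (2 * cos \<phi>) (Suc d') * snd (Mf b (0, c)) - Aseq (2 * cos \<phi>) d' * snd (0::real, c)) = (0, c)"
    using h unfolding d' Mf_pow[where b=b and n=d' and z="(0,c)"] tau .
  have "Aseq (2 * cos \<phi>) d * (2 * c * b) = 0"
    using h2 unfolding d' by (simp add: Mf_def)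
  then have A1: "Aseq (2 * cos \<phi>) d = 0" using c bnz by simp
  have "- Aseq (2 * cos \<phi>) d' * c = c"
    using h2 A1 unfolding d' by (simp add: Mf_def)
  then have "(Aseq (2 * cos \<phi>) d' + 1) * c = 0" by (simp add: algebra_simps)
  then have A2: "Aseq (2 * cos \<phi>) d' = -1" using c by simp
  have s1: "sin (real d * \<phi>) = 0" using Aseq_sin[of \<phi> d] A1 by simp
  have s2: "sin (real d' * \<phi>) = - sin \<phi>" using Aseq_sin[of \<phi> d'] A2 by simp
  have "real d' * \<phi> = real d * \<phi> - \<phi>" using d' by (simp add: algebra_simps)
  then have "sin (real d' * \<phi>) = - cos (real d * \<phi>) * sin \<phi>" using s1 by (simp add: sin_diff)
  then have cd: "cos (real d * \<phi>) = 1" using s2 sphi by simp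
  then obtain n :: int where n0: "real d * \<phi> = real_of_int n * 2 * pi" using cos_one_2pi_int by blast
  then have n: "real d * \<phi> = real_of_int n * (2 * pi)" by simp
  have "0 < real d * \<phi>" using d phi_pos by simp
  then have n00: "0 < real_of_int n" using n pi_gt_zero by (simp add: zero_less_mult_iff)
  have "real d * \<phi> = (real d / real k) * (2 * pi)" unfolding \<phi>_def by simp
  moreover have "real d / real k < 1" using d by simp
  moreover have "(real d / real k) * (2 * pi) < 1 * (2 * pi)" using \<open>real d / real k < 1\<close> pi_gt_zero
    by (intro mult_strict_right_mono) auto
  ultimately have "real d * \<phi> < 1 * (2 * pi)" by simp
  then have "real_of_int n < 1" using n pi_gt_zero by simp
  then have "n < 1" by simp
  moreover have "0 < n" using n00 by simp
  ultimately show False by simp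
qed

lemma Mf_sum_period:
  assumes "(\<Sum>i<d. fst ((Mf b ^^ i) z)) = 0" "(\<Sum>i<d. snd ((Mf b ^^ i) z)) = 0"
  shows "(Mf b ^^ d) z = z"
proof -
  define p where "p i = fst ((Mf b ^^ i) z)" for i
  define q where "q i = snd ((Mf b ^^ i) z)" for i
  have stp: "p (Suc i) = 2 * b * q i - p i" "q (Suc i) = (4 * b^2 - 1) * q i - 2 * b * p i" for i
    unfolding p_def q_def by (simp_all add: Mf_def algebra_simps power2_eq_square)
  have Sp: "(\<Sum>i<d. p i) = 0" and Sq: "(\<Sum>i<d. q i) = 0" using assms unfolding p_def q_def by auto
  have shift: "(\<Sum>i<d. f (Suc i)) = (\<Sum>i<d. f i) - f 0 + f d" for f :: "nat \<Rightarrow> real"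
  proof -
    have "(\<Sum>i<Suc d. f i) = f 0 + (\<Sum>i<d. f (Suc i))" by (rule sum.lessThan_Suc_shift)
    moreover have "(\<Sum>i<Suc d. f i) = (\<Sum>i<d. f i) + f d" by simp
    ultimately show ?thesis by simp
  qed
  have "(\<Sum>i<d. p (Suc i)) = (\<Sum>i<d. 2 * b * q i - p i)" by (intro sum.cong refl) (simp add: stp(1))
  also have "\<dots> = 2 * b * (\<Sum>i<d. q i) - (\<Sum>i<d. p i)" by (simp add: sum_subtractf sum_distrib_left)
  finally have "p d = p 0" using shift[of p] Sp Sq by simp
  have "(\<Sum>i<d. q (Suc i)) = (\<Sum>i<d. (4 * b^2 - 1) * q i - 2 * b * p i)" by (intro sum.cong refl) (simp add: stp(2))
  also have "\<dots> = (4 * b^2 - 1) * (\<Sum>i<d. q i) - 2 * b * (\<Sum>i<d. p i)" by (simp add: sum_subtractf sum_distrib_left)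
  finally have "q d = q 0" using shift[of q] Sp Sq by simp
  show ?thesis using \<open>p d = p 0\<close> \<open>q d = q 0\<close> unfolding p_def q_def by (simp add: prod_eq_iff)
qed

context coxsys
begin

definition bb :: "'a \<Rightarrow> 'a \<Rightarrow> real" where
  "bb s u = (case m s u of enat k \<Rightarrow> - cos (pi / real k) | \<infinity> \<Rightarrow> -1)"
definition Bf where "Bf s v = (\<Sum>u\<in>S. bb s u * v u)"
definition sig where "sig s v = (\<lambda>x. v x - (if x = s then 2 * Bf s v else 0))"
definition U :: "'a \<Rightarrow> 'a \<Rightarrow> ('a \<Rightarrow> real) \<Rightarrow> real \<Rightarrow> real \<Rightarrow> 'a \<Rightarrow> real" where
  "U s t v \<alpha> \<beta> = (\<lambda>x. v x - (if x = s then \<alpha> else 0) - (if x = t then \<beta> else 0))"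

lemma bb_ss: "s \<in> S \<Longrightarrow> bb s s = 1"
  unfolding bb_def using m_refl[of s] by (simp add: one_enat_def)

lemma bb_sym: "s \<in> S \<Longrightarrow> u \<in> S \<Longrightarrow> bb s u = bb u s"
  unfolding bb_def using m_sym by simp

lemma bb_fin: "m s t = enat k \<Longrightarrow> bb s t = - cos (pi / real k)"
  unfolding bb_def by simp

lemma bb_inf: "m s t = \<infinity> \<Longrightarrow> bb s t = -1"
  unfolding bb_def by simp

lemma sum_delta': "finite A \<Longrightarrow> (\<Sum>x\<in>A. (f x::real) * (if x = a then c else 0)) = (if a \<in> A then f a * c else 0)"
proof -
  assume "finite A"
  have "(\<Sum>x\<in>A. f x * (if x = a then c else 0)) = (\<Sum>x\<in>A. if x = a then f a * c else 0)"
    by (intro sum.cong refl) auto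
  then show ?thesis using \<open>finite A\<close> by (simp add: sum.delta)
qed

lemma Bf_U: "s \<in> S \<Longrightarrow> t \<in> S \<Longrightarrow> Bf r (U s t v \<alpha> \<beta>) = Bf r v - \<alpha> * bb r s - \<beta> * bb r t"
proof -
  assume st: "s \<in> S" "t \<in> S"
  have "Bf r (U s t v \<alpha> \<beta>) = (\<Sum>x\<in>S. bb r x * v x - bb r x * (if x = s then \<alpha> else 0) - bb r x * (if x = t then \<beta> else 0))"
    unfolding Bf_def U_def by (simp add: algebra_simps)
  also have "\<dots> = (\<Sum>x\<in>S. bb r x * v x) - (\<Sum>x\<in>S. bb r x * (if x = s then \<alpha> else 0)) - (\<Sum>x\<in>S. bb r x * (if x = t then \<beta> else 0))"
    by (simp add: sum_subtractf)
  also have "\<dots> = Bf r v - \<alpha> * bb r s - \<beta> * bb r t"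
    unfolding Bf_def using sum_delta'[OF finS, of "bb r" s \<alpha>] sum_delta'[OF finS, of "bb r" t \<beta>] st by (simp add: mult.commute)
  finally show ?thesis .
qed

lemma U_U: "U s t (U s t v \<alpha> \<beta>) \<alpha>' \<beta>' = U s t v (\<alpha> + \<alpha>') (\<beta> + \<beta>')"
  unfolding U_def by (auto simp: fun_eq_iff)

lemma U_0: "U s t v 0 0 = v" unfolding U_def by simp

lemma sig_s: "sig s v = U s t v (2 * Bf s v) 0" unfolding sig_def U_def by simp
lemma sig_t: "s \<noteq> t \<Longrightarrow> sig t v = U s t v 0 (2 * Bf t v)" unfolding sig_def U_def by (auto simp: fun_eq_iff)

lemma sig_sig: "s \<in> S \<Longrightarrow> sig s (sig s v) = v"
proof -
  assume s: "s \<in> S"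
  have "Bf s (sig s v) = - Bf s v"
    using Bf_U[OF s s, of s v "2 * Bf s v" 0] bb_ss[OF s] by (simp add: sig_s[of s v s])
  then show ?thesis unfolding sig_def by (auto simp: fun_eq_iff)
qed

definition gg where "gg s t = sig s \<circ> sig t"

lemma gg_step:
  assumes st: "s \<in> S" "t \<in> S" "s \<noteq> t"
  shows "gg s t v = U s t v (2 * (Bf s v - 2 * Bf t v * bb s t)) (2 * Bf t v)"
    and "(Bf s (gg s t v), Bf t (gg s t v)) = Mf (bb s t) (Bf s v, Bf t v)"
proof -
  have bts: "bb t s = bb s t" using bb_sym st by simp
  have P1: "Bf s (sig t v) = Bf s v - 2 * Bf t v * bb s t"
    using Bf_U[OF st(1,2), of s v 0 "2 * Bf t v"] sig_t[OF st(3)] by simp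
  have Q1: "Bf t (sig t v) = - Bf t v"
    using Bf_U[OF st(1,2), of t v 0 "2 * Bf t v"] sig_t[OF st(3)] bb_ss[OF st(2)] by simp
  have g: "gg s t v = U s t (U s t v 0 (2 * Bf t v)) (2 * Bf s (sig t v)) 0"
    unfolding gg_def comp_def using sig_s[of s "sig t v" t] sig_t[OF st(3), of v] by simp
  then show g2: "gg s t v = U s t v (2 * (Bf s v - 2 * Bf t v * bb s t)) (2 * Bf t v)"
    unfolding U_U P1 by simp
  show "(Bf s (gg s t v), Bf t (gg s t v)) = Mf (bb s t) (Bf s v, Bf t v)"
    unfolding g2 Bf_U[OF st(1,2)] Mf_def using bb_ss st bts by (simp add: algebra_simps)
qed

lemma gg_pow_PQ:
  assumes st: "s \<in> S" "t \<in> S" "s \<noteq> t"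
  shows "(Bf s ((gg s t ^^ k) v), Bf t ((gg s t ^^ k) v)) = (Mf (bb s t) ^^ k) (Bf s v, Bf t v)"
proof (induction k)
  case 0 then show ?case by simp
next
  case (Suc k)
  have "(Bf s ((gg s t ^^ Suc k) v), Bf t ((gg s t ^^ Suc k) v))
     = Mf (bb s t) (Bf s ((gg s t ^^ k) v), Bf t ((gg s t ^^ k) v))"
    using gg_step(2)[OF st, of "(gg s t ^^ k) v"] by simp
  then show ?case using Suc by simp
qed

lemma gg_pow:
  assumes st: "s \<in> S" "t \<in> S" "s \<noteq> t"
  shows "(gg s t ^^ k) v = U s t v (\<Sum>i<k. 2 * (fst ((Mf (bb s t) ^^ i) (Bf s v, Bf t v)) - 2 * snd ((Mf (bb s t) ^^ i) (Bf s v, Bf t v)) * bb s t))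
                                   (\<Sum>i<k. 2 * snd ((Mf (bb s t) ^^ i) (Bf s v, Bf t v)))"
proof (induction k)
  case 0 then show ?case by (simp add: U_0)
next
  case (Suc k)
  have "(gg s t ^^ Suc k) v = gg s t ((gg s t ^^ k) v)" by simp
  also have "\<dots> = U s t ((gg s t ^^ k) v) (2 * (Bf s ((gg s t ^^ k) v) - 2 * Bf t ((gg s t ^^ k) v) * bb s t)) (2 * Bf t ((gg s t ^^ k) v))"
    by (rule gg_step(1)[OF st])
  also have "\<dots> = U s t ((gg s t ^^ k) v) (2 * (fst ((Mf (bb s t) ^^ k) (Bf s v, Bf t v)) - 2 * snd ((Mf (bb s t) ^^ k) (Bf s v, Bf t v)) * bb s t))
      (2 * snd ((Mf (bb s t) ^^ k) (Bf s v, Bf t v)))"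
    using gg_pow_PQ[OF st, of k v] by (simp add: prod_eq_iff)
  finally show ?case unfolding Suc U_U by simp
qed

lemma foldr_alt: "foldr sig (alt_word s t (2*k)) v = (gg s t ^^ k) v"
proof (induction k arbitrary: v)
  case 0 then show ?case by simp
next
  case (Suc k)
  have "alt_word s t (2 * Suc k) = s # t # alt_word s t (2*k)" by (simp add: numeral_2_eq_2)
  then show ?case using Suc by (simp add: gg_def)
qed

lemma foldr_rel:
  assumes st: "s \<in> S" "t \<in> S" "m s t = enat k"
  shows "foldr sig (alt_word s t (2*k)) v = v"
proof (cases "s = t")
  case True
  then have "k = 1" using m_refl[of s] st by (simp add: one_enat_def)
  then show ?thesis using True sig_sig st by (simp add: numeral_2_eq_2)
next
  case False
  have k2: "2 \<le> k" using m_ge2[OF st(1,2) False] st by (simp add: numeral_eq_enat)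
  have b: "bb s t = - cos (pi / real k)" using bb_fin st by simp
  have z: "(\<Sum>i<k. fst ((Mf (bb s t) ^^ i) (Bf s v, Bf t v))) = 0"
          "(\<Sum>i<k. snd ((Mf (bb s t) ^^ i) (Bf s v, Bf t v))) = 0"
    using Mf_sum_zero[OF k2 b] by auto
  have "(\<Sum>i<k. 2 * (fst ((Mf (bb s t) ^^ i) (Bf s v, Bf t v)) - 2 * snd ((Mf (bb s t) ^^ i) (Bf s v, Bf t v)) * bb s t)) = 0"
    using z by (simp add: sum_subtractf sum_distrib_left[symmetric] sum_distrib_right[symmetric] algebra_simps)
  moreover have "(\<Sum>i<k. 2 * snd ((Mf (bb s t) ^^ i) (Bf s v, Bf t v))) = 0"
    using z by (simp add: sum_distrib_left[symmetric])
  ultimately show ?thesis unfolding foldr_alt gg_pow[OF st(1,2) False] by (simp add: U_0)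
qed

lemma foldr_ri: "relator_insert S m a c \<Longrightarrow> foldr sig a = foldr sig c"
proof -
  assume "relator_insert S m a c"
  then obtain x y s t k where h: "s \<in> S" "t \<in> S" "m s t = enat k" "a = x @ y" "c = x @ alt_word s t (2 * k) @ y"
    unfolding relator_insert_def by blast
  show ?thesis
  proof
    fix v
    show "foldr sig a v = foldr sig c v" using foldr_rel[OF h(1-3)] h(4,5) by simp
  qed
qed

lemma foldr_E: "E u w \<Longrightarrow> foldr sig u = foldr sig w"
  unfolding coxeter_equiv_def
proof (induction rule: rtranclp_induct)
  case base then show ?case by simp
next
  case (step a c)
  have "foldr sig a = foldr sig c"
    using step(2) foldr_ri by metis
  with step(3) show ?case by simp
qed


lemma b_sq_lt1: "2 \<le> k \<Longrightarrow> (cos (pi / real k))^2 < 1"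
proof -
  assume k: "2 \<le> k"
  have "0 \<le> cos (pi / real k)" "cos (pi / real k) < 1" using cos_pi_k_lt1 cos_pi_k_nonneg k by auto
  then show ?thesis by (simp add: power_less_one_iff)
qed

lemma fixed_sums:
  assumes st: "s \<in> S" "t \<in> S" "s \<noteq> t" and fx: "(gg s t ^^ d) v = v"
  shows "(\<Sum>i<d. fst ((Mf (bb s t) ^^ i) (Bf s v, Bf t v))) = 0 \<and> (\<Sum>i<d. snd ((Mf (bb s t) ^^ i) (Bf s v, Bf t v))) = 0"
proof -
  define p where "p i = fst ((Mf (bb s t) ^^ i) (Bf s v, Bf t v))" for i
  define q where "q i = snd ((Mf (bb s t) ^^ i) (Bf s v, Bf t v))" for i
  have e: "U s t v (\<Sum>i<d. 2 * (p i - 2 * q i * bb s t)) (\<Sum>i<d. 2 * q i) = v"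
    using gg_pow[OF st, of d v] fx unfolding p_def q_def by simp
  have "U s t v (\<Sum>i<d. 2 * (p i - 2 * q i * bb s t)) (\<Sum>i<d. 2 * q i) t = v t" using e by simp
  then have "(\<Sum>i<d. 2 * q i) = 0" using st unfolding U_def by simp
  then have Sq: "(\<Sum>i<d. q i) = 0" by (simp add: sum_distrib_left[symmetric])
  have "U s t v (\<Sum>i<d. 2 * (p i - 2 * q i * bb s t)) (\<Sum>i<d. 2 * q i) s = v s" using e by simp
  then have "(\<Sum>i<d. 2 * (p i - 2 * q i * bb s t)) = 0" using st unfolding U_def by simp
  moreover have "(\<Sum>i<d. 2 * (p i - 2 * q i * bb s t)) = 2 * (\<Sum>i<d. p i) - 4 * bb s t * (\<Sum>i<d. q i)"
    by (simp add: sum_subtractf sum_distrib_left sum_distrib_right algebra_simps)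
  ultimately have "(\<Sum>i<d. p i) = 0" using Sq by simp
  then show ?thesis using Sq unfolding p_def q_def by simp
qed

lemma Mf_inf_fix: "(Mf (-1) ^^ i) (1, -1) = (1, -1)"
  by (induction i) (simp_all add: Mf_def)

lemma alt_not_id:
  assumes st: "s \<in> S" "t \<in> S" "s \<noteq> t" and d: "0 < d" "enat d < m s t"
  shows "\<not> E (alt_word s t (2*d)) []"
proof
  assume "E (alt_word s t (2*d)) []"
  then have f: "foldr sig (alt_word s t (2*d)) = foldr sig []" by (rule foldr_E)
  have fx: "(gg s t ^^ d) v = v" for v using f foldr_alt[of s t d v] by (simp add: fun_eq_iff)
  have bts: "bb t s = bb s t" using bb_sym st by simp
  define v0 where "v0 = U s t (\<lambda>_. 0) (-1) 0"
  have v0: "Bf s v0 = 1" "Bf t v0 = bb s t"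
    unfolding v0_def Bf_U[OF st(1,2)] using bb_ss st bts by (simp_all add: Bf_def)
  show False
  proof (cases "m s t")
    case infinity
    then have b: "bb s t = -1" by (rule bb_inf)
    have "(\<Sum>i<d. snd ((Mf (bb s t) ^^ i) (Bf s v0, Bf t v0))) = 0" using fixed_sums[OF st fx] by blast
    then have "(\<Sum>i<d. (-1::real)) = 0" unfolding v0 b Mf_inf_fix by simp
    then show False using d by simp
  next
    case (enat k)
    have k2: "2 \<le> k" using m_ge2[OF st] enat by (simp add: numeral_eq_enat)
    have dk: "d < k" using d enat by simp
    have b: "bb s t = - cos (pi / real k)" using bb_fin enat by simp
    show False
    proof (cases "k = 2")
      case True
      then have "d = 1" using d dk by simp
      have "(\<Sum>i<d. fst ((Mf (bb s t) ^^ i) (Bf s v0, Bf t v0))) = 0" using fixed_sums[OF st fx] by blast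
      then show False using \<open>d = 1\<close> v0 by simp
    next
      case False
      then have k3: "3 \<le> k" using k2 by simp
      define v1 where "v1 = U s t (\<lambda>_. 0) (bb s t) (-1)"
      have v1: "Bf s v1 = 0" "Bf t v1 = 1 - (bb s t)^2"
        unfolding v1_def Bf_U[OF st(1,2)] using bb_ss st bts by (simp_all add: Bf_def power2_eq_square)
      have "(Mf (bb s t) ^^ d) (Bf s v1, Bf t v1) = (Bf s v1, Bf t v1)"
        using fixed_sums[OF st fx, of v1] Mf_sum_period by blast
      then have "(Mf (bb s t) ^^ d) (0, 1 - (bb s t)^2) = (0, 1 - (bb s t)^2)" unfolding v1 .
      moreover have "1 - (bb s t)^2 \<noteq> 0" using b_sq_lt1[OF k2] b by simp
      ultimately show False using Mf_faithful[OF k3 b d(1) dk] by blast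
    qed
  qed
qed

end

context coxsys
begin

lemma alt_red:
  assumes st: "s \<in> S" "t \<in> S" "s \<noteq> t" and k: "enat k \<le> m s t"
  shows "red (alt_word s t k)"
proof -
  have l: "alt_word s t k \<in> lists S" using alt_set[of s t k] st by auto
  define z where "z = (if odd k then s else t)"
  define z' where "z' = (if odd k then t else s)"
  have zs: "z \<in> S" "z' \<in> S" "z \<noteq> z'" "m z z' = m s t" using st m_sym unfolding z_def z'_def by auto
  have nth: "rl (alt_word s t k) ! j = alt_word z z' (2*(k-1-j)+1)" if "j < k" for j
    using rl_alt_nth[OF that, of s t] unfolding z_def z'_def by simp
  have key: "\<not> E (alt_word z z' (2*p+1)) (alt_word z z' (2*q+1))" if "q < p" "p < k" for p q
  proof
    assume h: "E (alt_word z z' (2*p+1)) (alt_word z z' (2*q+1))"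
    have "alt_word z z' (2*p+1) = alt_word z z' (2*(p-q)) @ alt_word z z' (2*q+1)"
      using alt_add[of z z' "2*(p-q)" "2*q+1"] that by (simp del: alt_word.simps add: algebra_simps)
    then have "E (alt_word z z' (2*(p-q)) @ alt_word z z' (2*q+1)) ([] @ alt_word z z' (2*q+1))" using h by simp
    moreover have "alt_word z z' (2*q+1) \<in> lists S" using alt_set[of z z' "2*q+1"] zs by auto
    ultimately have "E (alt_word z z' (2*(p-q))) []"
      using cancelR[of "alt_word z z' (2*q+1)"] by (simp del: alt_word.simps)
    moreover have "enat (p - q) < m z z'"
    proof -
      have "enat (p - q) < enat k" using that by simp
      then show ?thesis using k zs(4) by (metis less_le_trans)
    qed
    ultimately show False using alt_not_id[OF zs(1-3)] that by simp
  qed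
  have "distinct (map cls (rl (alt_word s t k)))"
    unfolding distinct_conv_nth
  proof (intro allI impI)
    fix i j assume ij: "i < length (map cls (rl (alt_word s t k)))" "j < length (map cls (rl (alt_word s t k)))" "i \<noteq> j"
    then have ik: "i < k" "j < k" by auto
    show "map cls (rl (alt_word s t k)) ! i \<noteq> map cls (rl (alt_word s t k)) ! j"
    proof (cases "i < j")
      case True
      then show ?thesis using ik key[of "k-1-j" "k-1-i"] nth cls_eq by simp
    next
      case False
      then have "j < i" using ij by simp
      then show ?thesis using ik key[of "k-1-i" "k-1-j"] nth cls_eq by (simp add: eq_commute)
    qed
  qed
  then show ?thesis using red_if_dist by blast
qed

lemma red_E: "red w \<Longrightarrow> E w u \<Longrightarrow> length u = length w \<Longrightarrow> red u"
  unfolding red_def by (metis E_sym E_trans)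

lemma red_len: "red w \<Longrightarrow> red u \<Longrightarrow> E w u \<Longrightarrow> length u = length w"
  unfolding red_def by (meson E_sym antisym)

lemma dih_reduce:
  assumes st: "s \<in> S" "t \<in> S" "s \<noteq> t"
  shows "z \<in> lists {s,t} \<Longrightarrow> \<exists>a b k. ((a = s \<and> b = t) \<or> (a = t \<and> b = s)) \<and> enat k \<le> m s t \<and> E z (alt_word a b k)"
proof (induction z)
  case Nil
  then show ?case by (intro exI[of _ s] exI[of _ t] exI[of _ 0]) (simp add: zero_enat_def[symmetric])
next
  case (Cons c z)
  then obtain a b k where ab: "(a = s \<and> b = t) \<or> (a = t \<and> b = s)" "enat k \<le> m s t" "E z (alt_word a b k)" by auto
  have c: "c = s \<or> c = t" using Cons by auto
  have mab: "m a b = m s t" using ab(1) m_sym st by auto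
  have m2: "enat 2 \<le> m s t" using m_ge2[OF st] by (simp add: numeral_eq_enat)
  have Ec: "E (c # z) (c # alt_word a b k)" using E_congL[OF ab(3), of "[c]"] by simp
  show ?case
  proof (cases k)
    case 0
    define d where "d = (if c = s then t else s)"
    have "c # alt_word a b k = alt_word c d 1" using 0 by simp
    moreover have "enat 1 \<le> m s t" using order_trans[OF _ m2, of "enat 1"] by simp
    ultimately show ?thesis using Ec c d_def st by (intro exI[of _ c] exI[of _ d] exI[of _ 1]) auto
  next
    case (Suc k')
    show ?thesis
    proof (cases "c = a")
      case True
      have "c # alt_word a b k = [a,a] @ alt_word b a k'" using Suc True by simp
      moreover have "E ([a,a] @ alt_word b a k') ([] @ alt_word b a k')"
        using E_congR[OF E_ss] ab(1) st by blast
      moreover have "enat k' \<le> m s t" using order_trans[OF _ ab(2), of "enat k'"] Suc by simp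
      ultimately show ?thesis using Ec ab(1) by (intro exI[of _ b] exI[of _ a] exI[of _ k']) (auto intro: E_trans)
    next
      case False
      then have cb: "c = b" using c ab(1) by auto
      have e: "c # alt_word a b k = alt_word b a (Suc k)" using cb by simp
      show ?thesis
      proof (cases "enat (Suc k) \<le> m s t")
        case True
        then show ?thesis using Ec e ab(1) by (intro exI[of _ b] exI[of _ a] exI[of _ "Suc k"]) auto
      next
        case False
        have mk: "m a b = enat k"
        proof (cases "m s t")
          case (enat j)
          then show ?thesis using False ab(2) mab by simp
        next
          case infinity
          then show ?thesis using False by simp
        qed
        have abS: "a \<in> S" "b \<in> S" using ab(1) st by auto
        have "E (b # alt_word a b k) (b # alt_word b a k)"
          using E_congL[OF braid[OF abS mk], of "[b]"] by simp
        moreover have "b # alt_word b a k = [b,b] @ alt_word a b k'" using Suc by simp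
        moreover have "E ([b,b] @ alt_word a b k') ([] @ alt_word a b k')"
          using E_congR[OF E_ss[OF abS(2)]] by blast
        moreover have "enat k' \<le> m s t" using order_trans[OF _ ab(2), of "enat k'"] Suc by simp
        ultimately show ?thesis using Ec cb ab(1) by (intro exI[of _ a] exI[of _ b] exI[of _ k']) (auto intro: E_trans)
      qed
    qed
  qed
qed


lemma take_drop_split_left: "i < length x \<Longrightarrow> take i (x @ q) @ drop (Suc i) (x @ q) = (take i x @ drop (Suc i) x) @ q"
  by simp

lemma take_drop_split_right: "length x \<le> i \<Longrightarrow> take i (x @ q) @ drop (Suc i) (x @ q) = x @ (take (i - length x) q @ drop (Suc (i - length x)) q)"
  by (simp add: Suc_diff_le)

lemma two_desc:
  assumes v: "v \<in> lists S" "red v" and sr: "s \<in> S" "r \<in> S" "s \<noteq> r"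
    and ds: "\<not> red (v @ [s])" and dr: "\<not> red (v @ [r])"
  shows "\<exists>k y. m s r = enat k \<and> E v (y @ alt_word s r k) \<and> E v (y @ alt_word r s k) \<and> length y + k = length v"
proof -
  define P where "P x \<longleftrightarrow> x \<in> lists S \<and> (\<exists>z \<in> lists {s,r}. E v (x @ z))" for x
  have "P v" unfolding P_def using v by (intro conjI bexI[of _ "[]"]) auto
  then obtain x where Px: "P x" and xmin: "\<And>x'. P x' \<Longrightarrow> length x \<le> length x'"
    using ex_has_least_nat[of P v length] by blast
  obtain z where xS: "x \<in> lists S" and z: "z \<in> lists {s,r}" and Ez: "E v (x @ z)" using Px unfolding P_def by auto
  have srS: "{s,r} \<subseteq> S" using sr by auto
  have A: "red (x @ alt_word a b k)" if ab: "(a = s \<and> b = r) \<or> (a = r \<and> b = s)" and km: "enat k \<le> m s r" for a b k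
    using km
  proof (induction k)
    case 0
    show ?case unfolding red_def
    proof (intro allI impI)
      fix u assume "E (x @ alt_word a b 0) u"
      then have Eu: "E x u" by simp
      have "u \<in> lists S" using E_lists[OF Eu xS] .
      moreover have "E v (u @ z)" using Ez E_congR[OF Eu, of z] E_trans by blast
      ultimately have "P u" unfolding P_def using z by blast
      then show "length (x @ alt_word a b 0) \<le> length u" using xmin by simp
    qed
  next
    case (Suc k)
    have IH: "red (x @ alt_word a b k)" using Suc order_trans[OF _ Suc.prems, of "enat k"] by simp
    define e where "e = (if even k then a else b)"
    have eS: "e \<in> S" using ab sr unfolding e_def by auto
    have abS: "a \<in> S" "b \<in> S" "a \<noteq> b" using ab sr by auto
    have altS: "alt_word a b k \<in> lists S" using alt_set[of a b k] abS by auto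
    have snoc: "x @ alt_word a b (Suc k) = (x @ alt_word a b k) @ [e]" unfolding e_def using alt_snoc[of a b k] by simp
    show ?case
    proof (rule ccontr)
      assume nr: "\<not> red (x @ alt_word a b (Suc k))"
      obtain i where i: "i < length (x @ alt_word a b k)"
        and Ei: "E ((x @ alt_word a b k) @ [e]) (take i (x @ alt_word a b k) @ drop (Suc i) (x @ alt_word a b k))"
        using exchange[of "x @ alt_word a b k" e] xS altS eS IH nr snoc by auto
      show False
      proof (cases "i < length x")
        case True
        define x' where "x' = take i x @ drop (Suc i) x"
        have x'S: "x' \<in> lists S" using xS unfolding x'_def by (auto dest: in_set_takeD in_set_dropD)
        have h0: "E (x @ (alt_word a b k @ [e])) (x' @ alt_word a b k)" using Ei take_drop_split_left[OF True] unfolding x'_def by simp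
        have lq: "alt_word a b k @ [e] \<in> lists S" using altS eS by simp
        have Ex: "E x ((x' @ alt_word a b k) @ rev (alt_word a b k @ [e]))"
          by (rule E_move_right[OF lq h0])
        have "E v (x' @ (alt_word a b k @ rev (alt_word a b k @ [e]) @ z))"
          using Ez E_congR[OF Ex, of z] E_trans by simp
        moreover have "alt_word a b k @ rev (alt_word a b k @ [e]) @ z \<in> lists {s,r}"
          using alt_set[of a b k] ab z unfolding e_def by auto
        ultimately have "P x'" unfolding P_def using x'S by blast
        then show False using xmin True unfolding x'_def by fastforce
      next
        case False
        define j where "j = i - length x"
        have j: "j < k" using i False unfolding j_def by simp
        have "E (x @ alt_word a b (Suc k)) (x @ (take j (alt_word a b k) @ drop (Suc j) (alt_word a b k)))"
          using Ei snoc take_drop_split_right[of x i] False unfolding j_def by simp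
        then have "E (alt_word a b (Suc k)) (take j (alt_word a b k) @ drop (Suc j) (alt_word a b k))"
          using cancelL xS by blast
        moreover have "red (alt_word a b (Suc k))"
        proof -
          have "m a b = m s r" using ab m_sym sr by auto
          then show ?thesis using alt_red[OF abS, of "Suc k"] Suc.prems by (simp del: alt_word.simps)
        qed
        ultimately show False unfolding red_def using j by fastforce
      qed
    qed
  qed
  obtain a b k where ab: "(a = s \<and> b = r) \<or> (a = r \<and> b = s)" and km: "enat k \<le> m s r" and Ek: "E z (alt_word a b k)"
    using dih_reduce[OF sr z] by blast
  have Evx: "E v (x @ alt_word a b k)" using Ez E_congL[OF Ek, of x] E_trans by blast
  have redx: "red (x @ alt_word a b k)" using A ab km by blast
  have len: "length (x @ alt_word a b k) = length v" using red_len[OF v(2) redx Evx] .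
  define e where "e = (if even k then a else b)"
  have snoc: "x @ alt_word a b (Suc k) = (x @ alt_word a b k) @ [e]" unfolding e_def using alt_snoc[of a b k] by simp
  have notle: "\<not> enat (Suc k) \<le> m s r"
  proof
    assume le: "enat (Suc k) \<le> m s r"
    have r2: "red (x @ alt_word a b (Suc k))" using A ab le by blast
    have "e = s \<or> e = r" using ab unfolding e_def by auto
    then show False
    proof
      assume "e = s"
      have "E (v @ [s]) (x @ alt_word a b (Suc k))" using E_congR[OF Evx, of "[s]"] snoc \<open>e = s\<close> by simp
      then have "red (v @ [s])" using red_E[OF r2] E_sym len by simp
      then show False using ds by simp
    next
      assume "e = r"
      have "E (v @ [r]) (x @ alt_word a b (Suc k))" using E_congR[OF Evx, of "[r]"] snoc \<open>e = r\<close> by simp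
      then have "red (v @ [r])" using red_E[OF r2] E_sym len by simp
      then show False using dr by simp
    qed
  qed
  have mk: "m s r = enat k"
  proof (cases "m s r")
    case (enat j) then show ?thesis using notle km by simp
  next
    case infinity then show ?thesis using notle by simp
  qed
  have br: "E (alt_word s r k) (alt_word r s k)" using braid[OF sr(1,2) mk] .
  have "E v (x @ alt_word s r k) \<and> E v (x @ alt_word r s k)"
    using ab Evx E_congL[OF br, of x] E_congL[OF E_sym[OF br], of x] E_trans by blast
  then show ?thesis using mk len by (intro exI[of _ k] exI[of _ x]) simp
qed

end

context coxsys
begin

definition CM where "CM u v \<longleftrightarrow> comm_move m u v \<or> comm_move m v u"
abbreviation C where "C \<equiv> CM\<^sup>*\<^sup>*"

lemma CM_sym: "CM u v \<Longrightarrow> CM v u" unfolding CM_def by blast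

lemma C_sym: "C u v \<Longrightarrow> C v u"
proof (induction rule: rtranclp_induct)
  case base then show ?case by simp
next
  case (step y z)
  have "CM z y" using CM_sym step(2) by blast
  then show ?case using step(3) by (rule converse_rtranclp_into_rtranclp)
qed

lemma C_trans: "C u v \<Longrightarrow> C v w \<Longrightarrow> C u w" by (rule rtranclp_trans)

lemma cm_cong: "comm_move m u v \<Longrightarrow> comm_move m (p@u@q) (p@v@q)"
proof -
  assume "comm_move m u v"
  then obtain x y s t where h: "m s t = 2" "u = x @ [s, t] @ y" "v = x @ [t, s] @ y" unfolding comm_move_def by blast
  show ?thesis unfolding comm_move_def
    by (rule exI[of _ "p@x"], rule exI[of _ "y@q"], rule exI[of _ s], rule exI[of _ t]) (use h in simp)
qed

lemma C_cong: "C u v \<Longrightarrow> C (p@u@q) (p@v@q)"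
proof (induction rule: rtranclp_induct)
  case base then show ?case by simp
next
  case (step a b)
  have "CM (p@a@q) (p@b@q)" using step(2) cm_cong unfolding CM_def by blast
  with step(3) show ?case by (rule rtranclp.rtrancl_into_rtrancl)
qed

lemma C_congR: "C u v \<Longrightarrow> C (u@q) (v@q)" using C_cong[of u v "[]" q] by simp

lemma cm_E: "u \<in> lists S \<Longrightarrow> comm_move m u v \<Longrightarrow> E u v \<and> v \<in> lists S \<and> length v = length u"
proof -
  assume u: "u \<in> lists S" and cmv: "comm_move m u v"
  obtain x y s t where h: "m s t = 2" "u = x @ [s, t] @ y" "v = x @ [t, s] @ y"
    using cmv unfolding comm_move_def by blast
  have st: "s \<in> S" "t \<in> S" using u h(2) by auto
  have m2: "m s t = enat 2" using h(1) by (simp add: numeral_eq_enat)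
  have "E (alt_word s t 2) (alt_word t s 2)" by (rule braid[OF st m2])
  then have "E [s,t] [t,s]" by (simp add: numeral_2_eq_2)
  then have "E (x @ [s,t] @ y) (x @ [t,s] @ y)" by (rule E_cong)
  then have "E u v" using h by simp
  moreover have "v \<in> lists S" using u h by simp
  moreover have "length v = length u" using h by simp
  ultimately show ?thesis by blast
qed

lemma CM_E: "u \<in> lists S \<Longrightarrow> CM u v \<Longrightarrow> E u v \<and> v \<in> lists S \<and> length v = length u"
proof -
  assume u: "u \<in> lists S" and c: "CM u v"
  show ?thesis
  proof (cases "comm_move m u v")
    case True then show ?thesis using cm_E u by blast
  next
    case False
    then have cm: "comm_move m v u" using c unfolding CM_def by blast
    then obtain x y s t where h: "m s t = 2" "v = x @ [s, t] @ y" "u = x @ [t, s] @ y" unfolding comm_move_def by blast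
    have vS: "v \<in> lists S" using u h by simp
    have "E v u \<and> u \<in> lists S \<and> length u = length v" by (rule cm_E[OF vS cm])
    then show ?thesis using vS E_sym by simp
  qed
qed

lemma C_E: "C u v \<Longrightarrow> u \<in> lists S \<Longrightarrow> E u v \<and> v \<in> lists S \<and> length v = length u"
proof (induction rule: rtranclp_induct)
  case base then show ?case by simp
next
  case (step a b)
  have aS: "a \<in> lists S" "E u a" "length a = length u" using step(3,4) by auto
  have "E a b \<and> b \<in> lists S \<and> length b = length a" using CM_E[OF aS(1) step(2)] .
  then show ?case using aS E_trans[of u a b] by simp
qed

lemma CM_cm: "u \<in> lists S \<Longrightarrow> CM u v \<Longrightarrow> (comm_move m)\<^sup>*\<^sup>* u v"
proof -
  assume u: "u \<in> lists S" and "CM u v"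
  then consider "comm_move m u v" | "comm_move m v u" unfolding CM_def by blast
  then show ?thesis
  proof cases
    case 1 then show ?thesis by blast
  next
    case 2
    then obtain x y s t where h: "m s t = 2" "v = x @ [s, t] @ y" "u = x @ [t, s] @ y" unfolding comm_move_def by blast
    have st: "s \<in> S" "t \<in> S" using u h by auto
    then have "m t s = 2" using h m_sym by simp
    then have "comm_move m u v" unfolding comm_move_def using h by blast
    then show ?thesis by blast
  qed
qed

lemma C_cm: "C u v \<Longrightarrow> u \<in> lists S \<Longrightarrow> (comm_move m)\<^sup>*\<^sup>* u v"
proof (induction rule: rtranclp_induct)
  case base then show ?case by simp
next
  case (step a b)
  have "a \<in> lists S" using C_E step(1,4) by blast
  then have "(comm_move m)\<^sup>*\<^sup>* a b" using CM_cm step(2) by blast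
  then show ?case using step(3,4) rtranclp_trans by fast
qed

definition bad where
  "bad u \<longleftrightarrow> (\<exists>x y a. u = x @ [a,a] @ y) \<or> (\<exists>x y a b k. a \<noteq> b \<and> m a b = enat k \<and> 3 \<le> k \<and> u = x @ alt_word a b k @ y)"

definition good where "good w \<longleftrightarrow> (\<forall>u. C w u \<longrightarrow> \<not> bad u)"

lemma bad_app: "bad u \<Longrightarrow> bad (u @ q)"
proof -
  assume "bad u"
  then consider (a) x y a where "u = x @ [a,a] @ y" | (b) x y a b k where "a \<noteq> b" "m a b = enat k" "3 \<le> k" "u = x @ alt_word a b k @ y"
    unfolding bad_def by blast
  then show ?thesis
  proof cases
    case a then show ?thesis unfolding bad_def by (intro disjI1 exI[of _ x] exI[of _ "y @ q"] exI[of _ a]) simp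
  next
    case b then show ?thesis unfolding bad_def by (intro disjI2 exI[of _ x] exI[of _ "y @ q"] exI[of _ a] exI[of _ b] exI[of _ k]) simp
  qed
qed

lemma good_prefix: "good (w @ q) \<Longrightarrow> good w"
  unfolding good_def
proof (intro allI impI notI)
  fix u assume g: "\<forall>u. C (w @ q) u \<longrightarrow> \<not> bad u" and c: "C w u" and b: "bad u"
  have "C (w @ q) (u @ q)" using C_congR[OF c] .
  then show False using g bad_app[OF b] by blast
qed

lemma good_C: "good w \<Longrightarrow> C w w' \<Longrightarrow> good w'"
  unfolding good_def using C_trans[of w w'] by blast

lemma main: "\<forall>v. v \<in> lists S \<longrightarrow> length v = n \<longrightarrow> good v \<longrightarrow> red v \<and> (\<forall>u. E v u \<longrightarrow> length u = n \<longrightarrow> C v u)"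
proof (induction n)
  case 0
  show ?case unfolding red_def by auto
next
  case (Suc n)
  show ?case
  proof (intro allI impI)
    fix v assume vS: "v \<in> lists S" and lv: "length v = Suc n" and gv: "good v"
    obtain v' s where vv: "v = v' @ [s]" using lv by (cases v rule: rev_exhaust) auto
    have v'S: "v' \<in> lists S" and sS: "s \<in> S" using vS vv by auto
    have lv': "length v' = n" using lv vv by simp
    have gv': "good v'" using gv vv good_prefix by blast
    have IHr: "red v'" and IHc: "\<And>u. E v' u \<Longrightarrow> length u = n \<Longrightarrow> C v' u" using Suc.IH v'S lv' gv' by auto
    have redv: "red v"
    proof (rule ccontr)
      assume "\<not> red v"
      then obtain d where Ed: "E v d" and ld0: "\<not> length v \<le> length d" unfolding red_def by blast
      have ld: "length d < Suc n" using ld0 lv by simp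
      have "even (length v) = even (length d)" using E_parity[OF Ed] .
      then have ldn: "length d \<noteq> n" using lv by auto
      have "E (v' @ [s]) d" using Ed vv by simp
      then have E1: "E v' (d @ [s])" using E_move_right[of "[s]"] sS by simp
      have "length v' \<le> length (d @ [s])" using IHr E1 unfolding red_def by blast
      then have "length (d @ [s]) = n" using lv' ld ldn by simp
      then have "C v' (d @ [s])" using IHc E1 by blast
      then have "C v (d @ [s, s])" using C_congR[of v' "d @ [s]" "[s]"] vv by simp
      moreover have "bad (d @ [s, s])" unfolding bad_def by (intro disjI1 exI[of _ d] exI[of _ "[]"] exI[of _ s]) simp
      ultimately show False using gv unfolding good_def by blast
    qed
    show "red v \<and> (\<forall>u. E v u \<longrightarrow> length u = Suc n \<longrightarrow> C v u)"
    proof (intro conjI allI impI)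
      show "red v" by (rule redv)
    next
      fix u assume Eu: "E v u" and lu: "length u = Suc n"
      obtain u' r where uu: "u = u' @ [r]" using lu by (cases u rule: rev_exhaust) auto
      have uS: "u \<in> lists S" using E_lists[OF Eu vS] .
      then have u'S: "u' \<in> lists S" and rS: "r \<in> S" using uu by auto
      show "C v u"
      proof (cases "r = s")
        case True
        have "E (v' @ [s]) (u' @ [s])" using Eu vv uu True by simp
        then have "E v' u'" using cancelR[of "[s]"] sS by simp
        then have "C v' u'" using IHc uu lu by simp
        then show ?thesis using C_congR[of v' u' "[s]"] vv uu True by simp
      next
        case False
        have sr: "s \<noteq> r" using False by simp
        have nds: "\<not> red (v @ [s])"
        proof
          assume "red (v @ [s])"
          have e1: "E (v @ [s]) (v' @ [s,s])" using vv by simp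
          have e2: "E (v' @ [s,s]) (v' @ [])" using E_congL[OF E_ss[OF sS], of v'] by simp
          have "E (v @ [s]) v'" using E_trans[OF e1 e2] by simp
          then have "length (v @ [s]) \<le> length v'" using \<open>red (v @ [s])\<close> unfolding red_def by blast
          then show False using vv by simp
        qed
        have ndr: "\<not> red (v @ [r])"
        proof
          assume "red (v @ [r])"
          have e1: "E (v @ [r]) (u' @ [r,r])" using E_congR[OF Eu, of "[r]"] uu by simp
          have e2: "E (u' @ [r,r]) (u' @ [])" using E_congL[OF E_ss[OF rS], of u'] by simp
          have "E (v @ [r]) u'" using E_trans[OF e1 e2] by simp
          then have "length (v @ [r]) \<le> length u'" using \<open>red (v @ [r])\<close> unfolding red_def by blast
          then show False using uu lu lv by simp
        qed
        obtain k y where mk: "m s r = enat k" and E1: "E v (y @ alt_word s r k)" and E2: "E v (y @ alt_word r s k)"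
          and ly: "length y + k = length v"
          using two_desc[OF vS redv sS rS sr nds ndr] by blast
        have k2: "2 \<le> k" using m_ge2[OF sS rS] False mk by (simp add: numeral_eq_enat)
        obtain k' where k': "k = Suc k'" using k2 by (cases k) auto
        define q' where "q' = (if even k' then alt_word s r k' else alt_word r s k')"
        define q where "q = (if even k' then alt_word s r k else alt_word r s k)"
        have qq: "q = q' @ [s]" unfolding q_def q'_def k' using alt_snoc[of s r k'] alt_snoc[of r s k'] by simp
        have Eq: "E v (y @ q)" unfolding q_def using E1 E2 by simp
        have yS: "y \<in> lists S" and q'S: "q' \<in> lists S"
          using E_lists[OF Eq vS] qq by auto
        have "E (v' @ [s]) ((y @ q') @ [s])" using Eq vv qq by simp
        then have Ev': "E v' (y @ q')" using cancelR[of "[s]"] sS by simp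
        have "length (y @ q') = n" using ly lv qq unfolding q_def q'_def k' by simp
        then have "C v' (y @ q')" using IHc Ev' by blast
        then have Cq: "C v (y @ q)" using C_congR[of v' "y @ q'" "[s]"] vv qq by simp
        have mrs: "m r s = enat k" using mk m_sym sS rS by simp
        show ?thesis
        proof (cases "k = 2")
          case False
          then have k3: "3 \<le> k" using k2 by simp
          have "bad (y @ q)"
          proof (cases "even k'")
            case True
            then show ?thesis unfolding bad_def q_def using mk k3 \<open>r \<noteq> s\<close>
              by (intro disjI2 exI[of _ y] exI[of _ "[]"] exI[of _ s] exI[of _ r] exI[of _ k]) auto
          next
            case False
            then show ?thesis unfolding bad_def q_def using mrs k3 \<open>r \<noteq> s\<close>
              by (intro disjI2 exI[of _ y] exI[of _ "[]"] exI[of _ r] exI[of _ s] exI[of _ k]) auto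
          qed
          then show ?thesis using gv Cq unfolding good_def by blast
        next
          case True
          then have q2: "q = [r, s]" unfolding q_def using k' by (simp add: numeral_2_eq_2)
          have "comm_move m (y @ [r, s] @ []) (y @ [s, r] @ [])"
            unfolding comm_move_def using mrs True by (auto simp: numeral_eq_enat)
          then have "C (y @ [r, s]) (y @ [s, r])" unfolding CM_def by (simp add: r_into_rtranclp)
          then have Csr: "C v (y @ [s, r])" using C_trans[of v "y @ [r,s]" "y @ [s,r]"] Cq q2 by simp
          have gy: "good (y @ [s])" using good_C[OF gv Csr] good_prefix[of "y @ [s]" "[r]"] by simp
          have "E v (y @ [s, r])" using C_E[OF Csr vS] by blast
          then have "E (y @ [s, r]) u" using E_trans[OF E_sym Eu] by blast
          then have "E ((y @ [s]) @ [r]) (u' @ [r])" using uu by simp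
          then have Eu': "E (y @ [s]) u'" using cancelR[of "[r]"] rS by simp
          have ys: "y @ [s] \<in> lists S" using yS sS by simp
          have lys: "length (y @ [s]) = n" using ly lv True by simp
          have "length u' = n" using lu uu by simp
          then have "C (y @ [s]) u'" using Suc.IH ys lys gy Eu' by blast
          then have "C (y @ [s, r]) u" using C_congR[of "y @ [s]" u' "[r]"] uu by simp
          then show ?thesis using C_trans[OF Csr] by blast
        qed
      qed
    qed
  qed
qed

end

context coxsys
begin

lemma cls_mem: "w \<in> cls w" unfolding cox_elem_def by simp

lemma cls_lists: "w \<in> lists S \<Longrightarrow> X = cls w \<Longrightarrow> v \<in> X \<Longrightarrow> v \<in> lists S"
  unfolding cox_elem_def using E_lists by blast

lemma reduced_exprs_iff:
  assumes "w \<in> lists S"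
  shows "v \<in> reduced_exprs (cls w) \<longleftrightarrow> E w v \<and> red v"
proof
  assume v: "v \<in> reduced_exprs (cls w)"
  then have Ev: "E w v" and lv: "length v = cox_length (cls w)" unfolding reduced_exprs_def cox_elem_def by auto
  have "red v" unfolding red_def
  proof (intro allI impI)
    fix u assume "E v u"
    then have "u \<in> cls w" using Ev E_trans unfolding cox_elem_def by blast
    then have "cox_length (cls w) \<le> length u" unfolding cox_length_def by (intro Least_le) blast
    then show "length v \<le> length u" using lv by simp
  qed
  then show "E w v \<and> red v" using Ev by simp
next
  assume h: "E w v \<and> red v"
  have "cox_length (cls w) = length v" unfolding cox_length_def
  proof (rule Least_equality)
    show "\<exists>u\<in>cls w. length u = length v" using h unfolding cox_elem_def by blast
  next
    fix n assume "\<exists>u\<in>cls w. length u = n"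
    then obtain u where "u \<in> cls w" "length u = n" by blast
    then have "E v u" using h E_trans E_sym unfolding cox_elem_def by blast
    then show "length v \<le> n" using h \<open>length u = n\<close> unfolding red_def by blast
  qed
  then show "v \<in> reduced_exprs (cls w)" using h unfolding reduced_exprs_def cox_elem_def by simp
qed

lemma reduced_exists: "\<exists>v. v \<in> reduced_exprs (cls w)"
proof -
  have "\<exists>n. \<exists>v\<in>cls w. length v = n" using cls_mem by blast
  then have "\<exists>v\<in>cls w. length v = cox_length (cls w)" unfolding cox_length_def by (rule LeastI_ex)
  then show ?thesis unfolding reduced_exprs_def by blast
qed

definition proj where "proj a b u = filter (\<lambda>c. c = a \<or> c = b) u"

lemma proj_cm:
  assumes ab: "a \<in> S" "b \<in> S" "m a b \<noteq> 2" and c: "comm_move m u v"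
  shows "proj a b u = proj a b v"
proof -
  obtain x y s t where h: "m s t = 2" "u = x @ [s, t] @ y" "v = x @ [t, s] @ y" using c unfolding comm_move_def by blast
  have "proj a b [s,t] = proj a b [t,s]"
  proof (cases "s = t")
    case True then show ?thesis by simp
  next
    case False
    have "\<not> ((s = a \<or> s = b) \<and> (t = a \<or> t = b))"
    proof
      assume "(s = a \<or> s = b) \<and> (t = a \<or> t = b)"
      then have "(s = a \<and> t = b) \<or> (s = b \<and> t = a)" using False by auto
      then show False using h(1) ab m_sym by auto
    qed
    then show ?thesis unfolding proj_def by auto
  qed
  moreover have "proj a b u = proj a b x @ proj a b [s,t] @ proj a b y"
    unfolding proj_def h(2) filter_append ..
  moreover have "proj a b v = proj a b x @ proj a b [t,s] @ proj a b y"
    unfolding proj_def h(3) filter_append ..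
  ultimately show ?thesis by simp
qed

lemma proj_cms:
  assumes ab: "a \<in> S" "b \<in> S" "m a b \<noteq> 2" and c: "(comm_move m)\<^sup>*\<^sup>* u v"
  shows "proj a b u = proj a b v"
  using c
proof (induction rule: rtranclp_induct)
  case base then show ?case by simp
next
  case (step y z) then show ?case using proj_cm[OF ab] by simp
qed

lemma proj_alt: "proj a b (alt_word a b k) = alt_word a b k"
  unfolding proj_def using alt_set[of a b k] by (auto simp: filter_id_conv)

lemma proj_alt': "proj a b (alt_word b a k) = alt_word b a k"
  unfolding proj_def using alt_set[of b a k] by (auto simp: filter_id_conv)

lemma fc_good:
  assumes wS: "w \<in> lists S" and rw: "red w" and fc: "fully_commutative m (cls w)"
  shows "good w"
  unfolding good_def
proof (intro allI impI notI)
  fix u assume Cu: "C w u" and bu: "bad u"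
  have uinfo: "E w u \<and> u \<in> lists S \<and> length u = length w" using C_E[OF Cu wS] .
  have ru: "red u" using red_E[OF rw] uinfo by blast
  have ur: "u \<in> reduced_exprs (cls w)" using reduced_exprs_iff[OF wS] uinfo ru by blast
  from bu consider (sq) x y a where "u = x @ [a,a] @ y"
    | (br) x y a b k where "a \<noteq> b" "m a b = enat k" "3 \<le> k" "u = x @ alt_word a b k @ y"
    unfolding bad_def by blast
  then show False
  proof cases
    case sq
    have aS: "a \<in> S" using uinfo sq by simp
    have "E (x @ [a,a] @ y) (x @ [] @ y)" using E_cong[OF E_ss[OF aS]] .
    then have "E u (x @ y)" using sq by simp
    then have "length u \<le> length (x @ y)" using ru unfolding red_def by blast
    then show False using sq by simp
  next
    case br
    obtain k'' where k'': "k = Suc (Suc k'')" using br(3) by (cases k; cases "k - 1") auto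
    have "a \<in> set (alt_word a b k)" "b \<in> set (alt_word a b k)" using k'' by auto
    then have abS: "a \<in> S" "b \<in> S" using uinfo br(4) by auto
    define u2 where "u2 = x @ alt_word b a k @ y"
    have "E u u2" unfolding u2_def br(4) using E_cong[OF braid[OF abS br(2)]] .
    then have "E w u2" using uinfo E_trans by blast
    moreover have "red u2" using red_E[OF ru \<open>E u u2\<close>] unfolding u2_def br(4) by simp
    ultimately have u2r: "u2 \<in> reduced_exprs (cls w)" using reduced_exprs_iff[OF wS] by blast
    have "(comm_move m)\<^sup>*\<^sup>* u u2" using fc ur u2r unfolding fully_commutative_def by blast
    moreover have "m a b \<noteq> 2" using br by (auto simp: numeral_eq_enat)
    ultimately have "proj a b u = proj a b u2" using proj_cms abS by blast
    moreover have "proj a b u = proj a b x @ alt_word a b k @ proj a b y"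
      unfolding br(4) using proj_alt[of a b k] unfolding proj_def filter_append by simp
    moreover have "proj a b u2 = proj a b x @ alt_word b a k @ proj a b y"
      unfolding u2_def using proj_alt'[of a b k] unfolding proj_def filter_append by simp
    ultimately have "alt_word a b k = alt_word b a k" by simp
    moreover obtain k' where "k = Suc k'" using br by (cases k) auto
    ultimately show False using br by simp
  qed
qed

lemma good_fc:
  assumes wS: "w \<in> lists S" and gw: "good w"
  shows "red w \<and> fully_commutative m (cls w) \<and> (\<forall>u. E w u \<longrightarrow> length u = length w \<longrightarrow> C w u)"
proof -
  have M: "red w \<and> (\<forall>u. E w u \<longrightarrow> length u = length w \<longrightarrow> C w u)" using main[of "length w"] wS gw by blast
  have "fully_commutative m (cls w)" unfolding fully_commutative_def
  proof (intro ballI)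
    fix u v assume u: "u \<in> reduced_exprs (cls w)" and v: "v \<in> reduced_exprs (cls w)"
    have u1: "E w u" "red u" using u reduced_exprs_iff[OF wS] by auto
    have v1: "E w v" "red v" using v reduced_exprs_iff[OF wS] by auto
    have "length u = length w" using red_len[OF _ u1(2) u1(1)] M by blast
    then have Cu: "C w u" using M u1 by blast
    have "length v = length w" using red_len[OF _ v1(2) v1(1)] M by blast
    then have Cv: "C w v" using M v1 by blast
    have "C u v" using C_trans[OF C_sym[OF Cu] Cv] .
    moreover have "u \<in> lists S" using E_lists[OF u1(1) wS] .
    ultimately show "(comm_move m)\<^sup>*\<^sup>* u v" using C_cm by blast
  qed
  then show ?thesis using M by blast
qed

end

locale coxpair =
  c1: coxsys S1 m1 + c2: coxsys S2 m2
  for S1 :: "'a set" and m1 and S2 :: "'b set" and m2 +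
  fixes \<phi> :: "'a \<Rightarrow> 'b"
  assumes inj: "inj_on \<phi> S1" and img: "\<phi> ` S1 \<subseteq> S2"
    and mono: "\<forall>s\<in>S1. \<forall>t\<in>S1. s \<noteq> t \<longrightarrow> m1 s t \<le> m2 (\<phi> s) (\<phi> t)"
begin

lemma map_S2: "w \<in> lists S1 \<Longrightarrow> map \<phi> w \<in> lists S2"
  using img by (auto simp: image_subset_iff)

lemma map_inj: "u \<in> lists S1 \<Longrightarrow> w \<in> lists S1 \<Longrightarrow> map \<phi> u = map \<phi> w \<Longrightarrow> u = w"
proof (induction u arbitrary: w)
  case Nil then show ?case by simp
next
  case (Cons a u)
  then obtain b w' where w: "w = b # w'" by (cases w) auto
  then have "\<phi> a = \<phi> b" "map \<phi> u = map \<phi> w'" using Cons by auto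
  moreover have "a \<in> S1" "b \<in> S1" using Cons w by auto
  ultimately have "a = b" using inj by (auto dest: inj_onD)
  then show ?case using Cons w \<open>map \<phi> u = map \<phi> w'\<close> by simp
qed

lemma m1_eq2:
  assumes st: "s \<in> S1" "t \<in> S1" and h: "m2 (\<phi> s) (\<phi> t) = 2"
  shows "m1 s t = 2"
proof -
  have "s \<noteq> t"
  proof
    assume "s = t"
    then have "m2 (\<phi> s) (\<phi> t) = 1" using c2.m_refl img st by auto
    then show False using h by simp
  qed
  then have "2 \<le> m1 s t" using c1.m_ge2 st by auto
  moreover have "m1 s t \<le> 2" using mono st h \<open>s \<noteq> t\<close> by metis
  ultimately show ?thesis by simp
qed

lemma lift_cm:
  assumes uS: "u \<in> lists S1" and c: "comm_move m2 (map \<phi> u) u'"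
  shows "\<exists>u2. u' = map \<phi> u2 \<and> comm_move m1 u u2"
proof -
  obtain x' y' s' t' where h: "m2 s' t' = 2" "map \<phi> u = x' @ [s', t'] @ y'" "u' = x' @ [t', s'] @ y'"
    using c unfolding comm_move_def by blast
  obtain x r where "u = x @ r" "map \<phi> x = x'" "map \<phi> r = [s',t'] @ y'" using h(2) map_eq_append_conv by metis
  moreover obtain s t y where "r = s # t # y" "\<phi> s = s'" "\<phi> t = t'" "map \<phi> y = y'" using calculation(3) by (auto simp: map_eq_Cons_conv)
  ultimately have u: "u = x @ [s,t] @ y" and im: "\<phi> s = s'" "\<phi> t = t'" "map \<phi> x = x'" "map \<phi> y = y'" by auto
  have st: "s \<in> S1" "t \<in> S1" using uS u by auto
  have "m1 s t = 2" using m1_eq2[OF st] h im by simp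
  then have "comm_move m1 u (x @ [t,s] @ y)" unfolding comm_move_def using u by blast
  moreover have "u' = map \<phi> (x @ [t,s] @ y)" using h im by simp
  ultimately show ?thesis by blast
qed

lemma lift_cm':
  assumes uS: "u \<in> lists S1" and c: "comm_move m2 u' (map \<phi> u)"
  shows "\<exists>u2. u' = map \<phi> u2 \<and> comm_move m1 u2 u"
proof -
  obtain x' y' s' t' where h: "m2 s' t' = 2" "u' = x' @ [s', t'] @ y'" "map \<phi> u = x' @ [t', s'] @ y'"
    using c unfolding comm_move_def by blast
  obtain x r where "u = x @ r" "map \<phi> x = x'" "map \<phi> r = [t',s'] @ y'" using h(3) map_eq_append_conv by metis
  moreover obtain t s y where "r = t # s # y" "\<phi> t = t'" "\<phi> s = s'" "map \<phi> y = y'" using calculation(3) by (auto simp: map_eq_Cons_conv)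
  ultimately have u: "u = x @ [t,s] @ y" and im: "\<phi> s = s'" "\<phi> t = t'" "map \<phi> x = x'" "map \<phi> y = y'" by auto
  have st: "s \<in> S1" "t \<in> S1" using uS u by auto
  have "m1 s t = 2" using m1_eq2[OF st] h im by simp
  then have "comm_move m1 (x @ [s,t] @ y) u" unfolding comm_move_def using u by blast
  moreover have "u' = map \<phi> (x @ [s,t] @ y)" using h im by simp
  ultimately show ?thesis by blast
qed

lemma lift_C:
  assumes c: "c2.C (map \<phi> w) u'" and wS: "w \<in> lists S1"
  shows "\<exists>u. u' = map \<phi> u \<and> c1.C w u \<and> u \<in> lists S1"
  using c
proof (induction rule: rtranclp_induct)
  case base then show ?case using wS by blast
next
  case (step a b)
  obtain u where u: "a = map \<phi> u" "c1.C w u" "u \<in> lists S1" using step(3) by blast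
  from step(2) consider "comm_move m2 (map \<phi> u) b" | "comm_move m2 b (map \<phi> u)" unfolding c2.CM_def u(1) by blast
  then show ?case
  proof cases
    case 1
    then obtain u2 where "b = map \<phi> u2" "comm_move m1 u u2" using lift_cm[OF u(3)] by blast
    moreover then have "c1.CM u u2" unfolding c1.CM_def by blast
    moreover have "u2 \<in> lists S1" using c1.CM_E[OF u(3) \<open>c1.CM u u2\<close>] by blast
    ultimately show ?thesis using rtranclp.rtrancl_into_rtrancl[OF u(2)] by blast
  next
    case 2
    then obtain u2 where "b = map \<phi> u2" "comm_move m1 u2 u" using lift_cm'[OF u(3)] by blast
    moreover then have "c1.CM u u2" unfolding c1.CM_def by blast
    moreover have "u2 \<in> lists S1" using c1.CM_E[OF u(3) \<open>c1.CM u u2\<close>] by blast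
    ultimately show ?thesis using rtranclp.rtrancl_into_rtrancl[OF u(2)] by blast
  qed
qed

lemma good_map:
  assumes wS: "w \<in> lists S1" and gw: "c1.good w"
  shows "c2.good (map \<phi> w)"
  unfolding c2.good_def
proof (intro allI impI notI)
  fix u' assume Cu': "c2.C (map \<phi> w) u'" and bu': "c2.bad u'"
  obtain u where u: "u' = map \<phi> u" "c1.C w u" "u \<in> lists S1" using lift_C[OF Cu' wS] by blast
  have nb: "\<not> c1.bad v" if "c1.C w v" for v using gw that unfolding c1.good_def by blast
  from bu' consider (sq) x' y' a' where "u' = x' @ [a',a'] @ y'"
    | (br) x' y' a' b' k where "a' \<noteq> b'" "m2 a' b' = enat k" "3 \<le> k" "u' = x' @ alt_word a' b' k @ y'"
    unfolding c2.bad_def by blast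
  then show False
  proof cases
    case sq
    obtain x r where "u = x @ r" "map \<phi> r = [a',a'] @ y'" using sq u(1) map_eq_append_conv by metis
    moreover obtain a b y where "r = a # b # y" "\<phi> a = a'" "\<phi> b = a'" using calculation(2) by (auto simp: map_eq_Cons_conv)
    ultimately have uu: "u = x @ [a,b] @ y" "\<phi> a = \<phi> b" by auto
    have "a \<in> S1" "b \<in> S1" using u(3) uu by auto
    then have "a = b" using inj uu(2) by (meson inj_onD)
    then have "c1.bad u" unfolding c1.bad_def using uu by blast
    then show False using nb u(2) by blast
  next
    case br
    obtain x r where xr: "u = x @ r" "map \<phi> r = alt_word a' b' k @ y'" using br(4) u(1) map_eq_append_conv by metis
    obtain z y where zy: "r = z @ y" "map \<phi> z = alt_word a' b' k" using xr(2) map_eq_append_conv by metis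
    obtain k'' where k'': "k = Suc (Suc (Suc k''))" using br(3) by (cases k; cases "k - 1"; cases "k - 2") auto
    have "map \<phi> z = a' # b' # alt_word a' b' (Suc k'')" using zy k'' by simp
    then obtain a b z' where z: "z = a # b # z'" "\<phi> a = a'" "\<phi> b = b'" by (auto simp: map_eq_Cons_conv)
    have zS: "z \<in> lists S1" using u(3) xr zy by auto
    then have abS: "a \<in> S1" "b \<in> S1" using z by auto
    have altS: "alt_word a b k \<in> lists S1" using alt_set[of a b k] abS by auto
    have "map \<phi> (alt_word a b k) = alt_word a' b' k"
      using z(2,3) by (induction k arbitrary: a b a' b') auto
    then have zalt: "z = alt_word a b k" using map_inj[OF zS altS] zy by simp
    have ab: "a \<noteq> b" using br(1) z by auto
    have uu: "u = x @ alt_word a b k @ y" using xr zy zalt by simp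
    have le0: "m1 a b \<le> m2 (\<phi> a) (\<phi> b)" using mono abS ab by blast
    have le: "m1 a b \<le> enat k" using le0 br(2) z by simp
    have ge: "2 \<le> m1 a b" using c1.m_ge2[OF abS ab] .
    obtain j where j: "m1 a b = enat j" using le by (cases "m1 a b") auto
    show False
    proof (cases "j = 2")
      case False
      then have j3: "3 \<le> j" "j \<le> k" using j le ge by (auto simp: numeral_eq_enat)
      have "alt_word a b k = alt_word a b j @ (if even j then alt_word a b (k - j) else alt_word b a (k - j))"
        using alt_add[of a b j "k - j"] j3 by simp
      then have "c1.bad u" unfolding c1.bad_def using uu ab j j3
        by (intro disjI2 exI[of _ x] exI[of _ "(if even j then alt_word a b (k - j) else alt_word b a (k - j)) @ y"]
            exI[of _ a] exI[of _ b] exI[of _ j]) simp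
      then show False using nb u(2) by blast
    next
      case True
      have "alt_word a b k = [a, b] @ (a # alt_word b a k'')" using k'' by simp
      then have uu2: "u = x @ [a,b] @ (a # alt_word b a k'' @ y)" using uu by simp
      have "comm_move m1 u (x @ [b,a] @ (a # alt_word b a k'' @ y))"
        unfolding comm_move_def using uu2 j True by (auto simp: numeral_eq_enat)
      then have "c1.C u (x @ [b,a] @ (a # alt_word b a k'' @ y))" unfolding c1.CM_def by (simp add: r_into_rtranclp)
      then have "c1.C w (x @ [b,a] @ (a # alt_word b a k'' @ y))" using rtranclp_trans[OF u(2)] by blast
      moreover have "c1.bad (x @ [b,a] @ (a # alt_word b a k'' @ y))" unfolding c1.bad_def
        by (intro disjI1 exI[of _ "x @ [b]"] exI[of _ "alt_word b a k'' @ y"] exI[of _ a]) simp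
      ultimately show False using nb by blast
    qed
  qed
qed

end

lemma (in coxsys) cox_length_red: "w \<in> lists S \<Longrightarrow> red w \<Longrightarrow> cox_length (cls w) = length w"
  using reduced_exprs_iff[of w w] unfolding reduced_exprs_def by simp

lemma (in coxsys) fc_finite: "finite (fc_elements S m l)"
proof -
  have "fc_elements S m l \<subseteq> cls ` {w. set w \<subseteq> S \<and> length w = l}"
  proof
    fix X assume X: "X \<in> fc_elements S m l"
    then obtain w where wS: "w \<in> lists S" and Xw: "X = cls w" and lX: "cox_length X = l"
      unfolding fc_elements_def coxeter_group_def by auto
    obtain v where v: "v \<in> reduced_exprs (cls w)" using reduced_exists by blast
    have Ev: "E w v" using v reduced_exprs_iff[OF wS] by blast
    have "v \<in> lists S" using E_lists[OF Ev wS] .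
    moreover have "length v = l" using v lX Xw unfolding reduced_exprs_def by simp
    moreover have "X = cls v" using Xw Ev cls_eq by simp
    ultimately show "X \<in> cls ` {w. set w \<subseteq> S \<and> length w = l}" by auto
  qed
  moreover have "finite {w. set w \<subseteq> S \<and> length w = l}" using finite_lists_length_eq[OF finS] .
  ultimately show ?thesis using finite_surj by blast
qed

context coxpair
begin

definition rw :: "'a list set \<Rightarrow> 'a list" where "rw X = (SOME v. v \<in> reduced_exprs X)"

lemma rw_info:
  assumes X: "X \<in> fc_elements S1 m1 l"
  shows "rw X \<in> lists S1 \<and> c1.red (rw X) \<and> length (rw X) = l \<and> X = c1.cls (rw X) \<and> c1.good (rw X)"
proof -
  obtain w where wS: "w \<in> lists S1" and Xw: "X = c1.cls w" and lX: "cox_length X = l" and fc: "fully_commutative m1 X"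
    using X unfolding fc_elements_def coxeter_group_def by auto
  have "rw X \<in> reduced_exprs X" unfolding rw_def Xw using c1.reduced_exists by (rule someI_ex)
  then have v: "rw X \<in> reduced_exprs (c1.cls w)" using Xw by simp
  have Ev: "c1.E w (rw X)" and rv: "c1.red (rw X)" using v c1.reduced_exprs_iff[OF wS] by auto
  have vS: "rw X \<in> lists S1" using c1.E_lists[OF Ev wS] .
  have lv: "length (rw X) = l" using v lX Xw unfolding reduced_exprs_def by simp
  have Xv: "X = c1.cls (rw X)" using Xw Ev c1.cls_eq by simp
  have "c1.good (rw X)" using c1.fc_good[OF vS rv] fc Xv by simp
  then show ?thesis using vS rv lv Xv by blast
qed

definition psi where "psi X = c2.cls (map \<phi> (rw X))"

lemma psi_in: "X \<in> fc_elements S1 m1 l \<Longrightarrow> psi X \<in> fc_elements S2 m2 l"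
proof -
  assume X: "X \<in> fc_elements S1 m1 l"
  note I = rw_info[OF X]
  have mS: "map \<phi> (rw X) \<in> lists S2" using map_S2 I by blast
  have g2: "c2.good (map \<phi> (rw X))" using good_map I by blast
  have G: "c2.red (map \<phi> (rw X)) \<and> fully_commutative m2 (c2.cls (map \<phi> (rw X)))"
    using c2.good_fc[OF mS g2] by blast
  have "cox_length (c2.cls (map \<phi> (rw X))) = l" using c2.cox_length_red[OF mS] G I by simp
  moreover have "c2.cls (map \<phi> (rw X)) \<in> coxeter_group S2 m2" unfolding coxeter_group_def using mS by blast
  ultimately show ?thesis unfolding psi_def fc_elements_def using G by blast
qed

lemma psi_inj: "inj_on psi (fc_elements S1 m1 l)"
proof (rule inj_onI)
  fix X Y assume X: "X \<in> fc_elements S1 m1 l" and Y: "Y \<in> fc_elements S1 m1 l" and eq: "psi X = psi Y"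
  note IX = rw_info[OF X] and IY = rw_info[OF Y]
  have mS: "map \<phi> (rw X) \<in> lists S2" using map_S2 IX by blast
  have g2: "c2.good (map \<phi> (rw X))" using good_map IX by blast
  have G: "\<forall>u. c2.E (map \<phi> (rw X)) u \<longrightarrow> length u = length (map \<phi> (rw X)) \<longrightarrow> c2.C (map \<phi> (rw X)) u"
    using c2.good_fc[OF mS g2] by blast
  have "c2.E (map \<phi> (rw X)) (map \<phi> (rw Y))" using eq c2.cls_eq unfolding psi_def by simp
  then have "c2.C (map \<phi> (rw X)) (map \<phi> (rw Y))" using G IX IY by simp
  then obtain u where u: "map \<phi> (rw Y) = map \<phi> u" "c1.C (rw X) u" "u \<in> lists S1" using lift_C IX by blast
  have "u = rw Y" using map_inj[OF u(3)] IY u(1) by simp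
  then have "c1.E (rw X) (rw Y)" using c1.C_E[OF u(2)] IX by blast
  then show "X = Y" using IX IY c1.cls_eq by metis
qed

lemma card_le: "card (fc_elements S1 m1 l) \<le> card (fc_elements S2 m2 l)"
  using card_inj_on_le[OF psi_inj _ c2.fc_finite] psi_in by blast

end

theorem lemma4p4:
  fixes S1 :: "'a set" and m1 :: "'a \<Rightarrow> 'a \<Rightarrow> enat"
    and S2 :: "'b set" and m2 :: "'b \<Rightarrow> 'b \<Rightarrow> enat"
    and \<phi> :: "'a \<Rightarrow> 'b"
  assumes "coxeter_matrix S1 m1" and "coxeter_irreducible S1 m1"
    and "coxeter_matrix S2 m2" and "coxeter_irreducible S2 m2"
    and "inj_on \<phi> S1" and "\<phi> ` S1 \<subseteq> S2"
    and "\<forall>s\<in>S1. \<forall>t\<in>S1. s \<noteq> t \<longrightarrow> m1 s t \<le> m2 (\<phi> s) (\<phi> t)"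
  shows "\<forall>l. card (fc_elements S1 m1 l) \<le> card (fc_elements S2 m2 l)"
proof
  fix l
  interpret P: coxpair S1 m1 S2 m2 \<phi>
    by (unfold_locales) (use assms in auto)
  show "card (fc_elements S1 m1 l) \<le> card (fc_elements S2 m2 l)" by (rule P.card_le)
qed

end
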